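(* Let $(E,\rho)$ be a metric space, $\varepsilon_0>0$, $k\ge1$, $(I_1,\dots,I_k)\in\mathrm{im}(\pi_k)$, and let $a_0,\dots,a_k\in E$ be distinct with $\rho(a_i,a_{i-1})\ge\varepsilon_0$ for $i=1,\dots,k$. Let $Y_1,\dots,Y_k$ be independent with $Y_i$ uniform on $I_i$, set $Y_0=0$, $Y_{k+1}=1$, and let $X$ be the $\mathbf D([0,1),E)$-valued process with $X(t)=a_i$ for $t\in[Y_i,Y_{i+1})$, $i=0,\dots,k$. Then for all $r\ge0$, $$D(r\,|\,X,\rho_{\mathbf D},1)\ge\varepsilon_0\,\frac{k}{2e}\Big(\prod_{i=1}^k|I_i|\Big)^{1/k}e^{-r/k},$$ where $|I_i|$ denotes the length of $I_i$.
   Context: Dyadic intervals of level $m$: $[(j-1)2^{-m},j2^{-m})$. For distinct $t_1,\dots,t_k\in[0,1)$ build a binary tree with root $[0,1)$; a node (dyadic interval of level $m$) containing at least two of the $t_i$ gets its two level-$(m+1)$ dyadic subintervals as children; nodes containing $0$ or $1$ points are leaves. $\pi_k(t_1,\dots,t_k)$ is the list of the $k$ leaves containing one point, in left-to-right order; $\mathrm{im}(\pi_k)$ is the set of all such lists. $\mathbf D([0,1),E)$: piecewise constant functions $[0,1)\to E$ with finitely many jumps (value after the jump at the jump time), with the projection $\sigma$-field; $\rho_{\mathbf D}(f,g)=\int_0^1\rho(f(t),g(t))dt$. Distortion rate function: $D(r\,|\,X,\rho_{\mathbf D},1)=\inf\{\mathbb E\rho_{\mathbf D}(X,\hat X):\hat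 X\ \mathbf D([0,1),E)\text{-valued},\ I(X;\hat X)\le r\}$, with mutual information $I(X;\hat X)=\int\log\frac{d\mathbb P_{X,\hat X}}{d(\mathbb P_X\otimes\mathbb P_{\hat X})}d\mathbb P_{X,\hat X}$ if absolutely continuous, $\infty$ otherwise. *)

theory Defs
  imports "HOL-Probability.Probability"
begin

text \<open>A dyadic interval of level m is encoded by the pair (m, j), 1 <= j <= 2^m,
  and denotes [(j-1) 2^-m, j 2^-m).\<close>

definition dyad :: "nat \<times> nat \<Rightarrow> real set" where
  "dyad mj = {(real (snd mj) - 1) / 2 ^ fst mj ..< real (snd mj) / 2 ^ fst mj}"

definition dyad_left :: "nat \<times> nat \<Rightarrow> real" where
  "dyad_left mj = (real (snd mj) - 1) / 2 ^ fst mj"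

definition dyad_len :: "nat \<times> nat \<Rightarrow> real" where
  "dyad_len mj = 1 / 2 ^ fst mj"

inductive in_tree :: "real set \<Rightarrow> nat \<times> nat \<Rightarrow> bool" for T where
  root: "in_tree T (0, 1)"
| child: "in_tree T (m, j) \<Longrightarrow> 2 \<le> card (T \<inter> dyad (m, j)) \<Longrightarrow> c \<in> {2 * j - 1, 2 * j}
          \<Longrightarrow> in_tree T (Suc m, c)"

definition one_point_leaves :: "real set \<Rightarrow> (nat \<times> nat) set" where
  "one_point_leaves T = {mj. in_tree T mj \<and> card (T \<inter> dyad mj) = 1}"

definition pi_k :: "real list \<Rightarrow> (nat \<times> nat) list" where
  "pi_k ts = (THE Is. distinct Is \<and> set Is = one_point_leaves (set ts)
                      \<and> sorted_wrt (\<lambda>I J. dyad_left I < dyad_left J) Is)"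

definition im_pi :: "nat \<Rightarrow> (nat \<times> nat) list set" where
  "im_pi k = {pi_k ts | ts. length ts = k \<and> distinct ts \<and> set ts \<subseteq> {0..<1}}"

text \<open>Piecewise constant functions [0,1) -> E with finitely many jumps, right-continuous
  (value after the jump at the jump time); represented as extensional functions on [0,1).\<close>
definition Dset :: "(real \<Rightarrow> 'e) set" where
  "Dset = {f \<in> extensional {0..<1}. \<exists>(n::nat) (s::nat \<Rightarrow> real). s 0 = 0 \<and> s n = 1
            \<and> (\<forall>j<n. s j < s (Suc j)) \<and> (\<forall>j<n. \<forall>t\<in>{s j..<s (Suc j)}. f t = f (s j))}"

definition Dmeas :: "(real \<Rightarrow> 'e::metric_space) measure" where
  "Dmeas = restrict_space (PiM {0..<1} (\<lambda>_. borel)) Dset"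

definition rhoD :: "(real \<Rightarrow> 'e::metric_space) \<Rightarrow> (real \<Rightarrow> 'e) \<Rightarrow> ennreal" where
  "rhoD f g = (\<integral>\<^sup>+ t \<in> {0..<1}. ennreal (dist (f t) (g t)) \<partial>lborel)"

definition mutual_inf :: "'a measure \<Rightarrow> 'b measure \<Rightarrow> ('a \<times> 'b) measure \<Rightarrow> ereal" where
  "mutual_inf S T Q =
    (let P = distr Q S fst \<Otimes>\<^sub>M distr Q T snd;
         L = (\<lambda>z. ln (enn2real (RN_deriv P Q z)))
     in if absolutely_continuous P Q
        then enn2ereal (\<integral>\<^sup>+ z. ennreal (max 0 (L z)) \<partial>Q)
             - enn2ereal (\<integral>\<^sup>+ z. ennreal (max 0 (- L z)) \<partial>Q)
        else \<infinity>)"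

text \<open>D(r | X, rho_D, 1), expressed through the law PX of X: infimum over all joint laws of
  (X, Xhat) on D x D with first marginal PX and mutual information at most r.\<close>
definition distortion_rate :: "real \<Rightarrow> (real \<Rightarrow> 'e::metric_space) measure \<Rightarrow> ennreal" where
  "distortion_rate r PX =
     (INF Q \<in> {Q. prob_space Q \<and> sets Q = sets (Dmeas \<Otimes>\<^sub>M Dmeas)
                 \<and> distr Q Dmeas fst = PX \<and> mutual_inf Dmeas Dmeas Q \<le> ereal r}.
        \<integral>\<^sup>+ z. rhoD (fst z) (snd z) \<partial>Q)"

text \<open>The process X: X(t) = a_i on [Y_i, Y_{i+1}) (Y_0 = 0, Y_{k+1} = 1), written as
  X(t) = a_{#{j in 1..k. Y_j <= t}} for t in [0,1), which agrees with the former whenever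
  Y_1 < ... < Y_k (almost surely) and is always an element of D.\<close>
definition Xproc :: "nat \<Rightarrow> (nat \<Rightarrow> 'e) \<Rightarrow> (nat \<Rightarrow> 'w \<Rightarrow> real) \<Rightarrow> 'w \<Rightarrow> real \<Rightarrow> 'e" where
  "Xproc k a Y \<omega> = restrict (\<lambda>t. a (card {j \<in> {1..k}. Y j \<omega> \<le> t})) {0..<1}"

end

theory Submission
  imports Defs
begin


definition cl :: "real \<Rightarrow> real" where "cl t = (if t \<in> {0..<1} then t else 0)"

lemma cl_in: "cl t \<in> {0..<1}" by (auto simp: cl_def)

lemma Dset_rc:
  assumes f: "f \<in> Dset" and c: "c \<in> {0..<1::real}"
  shows "\<exists>d>0. \<forall>u. c \<le> u \<and> u < c + d \<longrightarrow> f u = f c"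
proof -
  from f obtain n s where s: "s 0 = 0" "s n = 1" "\<forall>j<n. s j < s (Suc j)"
     "\<forall>j<n. \<forall>t\<in>{s j..<s (Suc j)}. f t = f (s j)" unfolding Dset_def by blast
  define A where "A = {j. j \<le> n \<and> s j \<le> c}"
  have fin: "finite A" unfolding A_def by auto
  have "0 \<in> A" using s c by (auto simp: A_def)
  define j where "j = Max A"
  have jA: "j \<in> A" using fin \<open>0 \<in> A\<close> unfolding j_def by (intro Max_in) auto
  have "j \<noteq> n" using jA s c by (auto simp: A_def)
  hence jn: "j < n" using jA by (auto simp: A_def)
  have nxt: "c < s (Suc j)"
  proof (rule ccontr)
    assume "\<not> c < s (Suc j)"
    hence "Suc j \<in> A" using jn by (auto simp: A_def)
    hence "Suc j \<le> j" using fin unfolding j_def by (intro Max_ge) auto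
    thus False by simp
  qed
  have sj: "s j \<le> c" using jA by (auto simp: A_def)
  show ?thesis
  proof (intro exI[of _ "s (Suc j) - c"] conjI allI impI)
    show "0 < s (Suc j) - c" using nxt by simp
    fix u assume u: "c \<le> u \<and> u < c + (s (Suc j) - c)"
    have "f u = f (s j)" using s(4)[rule_format, of j u] jn u sj by simp
    moreover have "f c = f (s j)" using s(4)[rule_format, of j c] jn nxt sj by simp
    ultimately show "f u = f c" by simp
  qed
qed

lemma meas_eval_D: "(\<lambda>f. f (cl x)) \<in> borel_measurable (Dmeas :: (real \<Rightarrow> 'e::metric_space) measure)"
  unfolding Dmeas_def
  by (intro measurable_restrict_space1 measurable_component_singleton) (rule cl_in)

lemma dyadic_approx:
  fixes c :: real assumes c: "c \<in> {0..<1}" and that: "d > 0"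
  shows "\<forall>\<^sub>F n in sequentially. c \<le> real_of_int \<lceil>2^n * c\<rceil> / 2^n \<and>
          real_of_int \<lceil>2^n * c\<rceil> / 2^n < c + d \<and> real_of_int \<lceil>2^n * c\<rceil> / 2^n < 1"
proof -
  have "(\<lambda>n. (1/2::real)^n) \<longlonglongrightarrow> 0" by (intro LIMSEQ_power_zero) auto
  moreover have "0 < min d (1 - c)" using c that by auto
  ultimately have "\<forall>\<^sub>F n in sequentially. (1/2::real)^n < min d (1 - c)"
    by (rule order_tendstoD)
  then show ?thesis
  proof eventually_elim
    case (elim n)
    have p: "(0::real) < 2^n" by simp
    define x where "x = real_of_int \<lceil>2^n * c\<rceil>"
    have cc: "x - 1 < 2^n * c \<and> 2^n * c \<le> x" unfolding x_def by (rule ceiling_correct)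
    have A: "c \<le> x / 2^n" using cc p by (simp add: le_divide_eq mult.commute)
    have "x < (c + (1/2)^n) * 2^n" using cc p by (simp add: algebra_simps power_divide)
    hence B: "x / 2^n < c + (1/2)^n" using p by (simp add: divide_less_eq)
    have A: "c \<le> real_of_int \<lceil>2^n * c\<rceil> / 2^n" using A x_def by simp
    have B: "real_of_int \<lceil>2^n * c\<rceil> / 2^n < c + (1/2)^n" using B x_def by simp
    show ?case using elim A B by linarith
  qed
qed

lemma space_Dmeas: "space (Dmeas :: (real \<Rightarrow> 'e::metric_space) measure) = Dset"
  unfolding Dmeas_def by (auto simp: space_restrict_space space_PiM Dset_def PiE_def)

lemma cl_meas[measurable]: "cl \<in> borel_measurable borel"
  unfolding cl_def by measurable

lemma ev_meas: "(\<lambda>(f,t). f (cl t)) \<in> borel_measurable ((Dmeas::(real\<Rightarrow>'e::metric_space) measure) \<Otimes>\<^sub>M (lborel::real measure))"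
proof (rule borel_measurable_LIMSEQ_metric)
  fix n :: nat
  let ?g = "\<lambda>(f::real\<Rightarrow>'e,t::real). \<lceil>2^n * cl t\<rceil>"
  have g: "?g \<in> measurable ((Dmeas::(real\<Rightarrow>'e::metric_space) measure) \<Otimes>\<^sub>M (lborel::real measure)) (count_space UNIV)"
    by measurable
  have fi: "(\<lambda>(f::real\<Rightarrow>'e,t::real). f (cl (real_of_int i / 2^n))) \<in> borel_measurable ((Dmeas::(real\<Rightarrow>'e::metric_space) measure) \<Otimes>\<^sub>M (lborel::real measure))" for i :: int
    using measurable_compose[OF measurable_fst[of "Dmeas::(real\<Rightarrow>'e::metric_space) measure" lborel] meas_eval_D[of "real_of_int i / 2^n"]] unfolding split_beta' by simp
  show "(\<lambda>(f::real\<Rightarrow>'e,t::real). f (cl (real_of_int \<lceil>2^n * cl t\<rceil> / 2^n))) \<in> borel_measurable ((Dmeas::(real\<Rightarrow>'e::metric_space) measure) \<Otimes>\<^sub>M (lborel::real measure))"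
    using measurable_compose_countable'[OF fi g] unfolding split_beta' by simp
next
  fix z assume z: "z \<in> space ((Dmeas::(real\<Rightarrow>'e::metric_space) measure) \<Otimes>\<^sub>M (lborel::real measure))"
  obtain f and t :: real where zft: "z = (f,t)" by (cases z)
  have f: "f \<in> Dset" using z zft by (simp add: space_pair_measure space_Dmeas)
  define c where "c = cl t"
  have c: "c \<in> {0..<1}" unfolding c_def by (rule cl_in)
  obtain d where d: "d > 0" "\<forall>u. c \<le> u \<and> u < c + d \<longrightarrow> f u = f c" using Dset_rc[OF f c] by blast
  have ev: "\<forall>\<^sub>F n in sequentially. f (cl (real_of_int \<lceil>2^n * c\<rceil> / 2^n)) = f c"
    using dyadic_approx[OF c d(1)]
  proof eventually_elim
    case (elim n)
    have "cl (real_of_int \<lceil>2^n * c\<rceil> / 2^n) = real_of_int \<lceil>2^n * c\<rceil> / 2^n"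
      using elim c unfolding cl_def by (simp add: not_le)
    thus ?case using elim d(2)[rule_format, of "real_of_int \<lceil>2^n * c\<rceil> / 2^n"] by simp
  qed
  show "(\<lambda>n. (case z of (f,t) \<Rightarrow> f (cl (real_of_int \<lceil>2^n * cl t\<rceil> / 2^n)))) \<longlonglongrightarrow> (case z of (f,t) \<Rightarrow> f (cl t))"
    unfolding zft using tendsto_eventually[OF ev] by (simp add: c_def)
qed

definition rt :: "nat \<Rightarrow> (nat \<Rightarrow> 'e::metric_space) \<Rightarrow> (real \<Rightarrow> 'e) \<Rightarrow> (real \<Rightarrow> 'e) \<Rightarrow> ennreal" where
  "rt k a f g = (\<integral>\<^sup>+ t. indicator {0..<1} t * (\<Sum>j\<in>{0..k}. indicator {a j} (f (cl t)) * ennreal (dist (a j) (g (cl t)))) \<partial>lborel)"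

lemma ev_meas_gen:
  assumes "h \<in> measurable N (Dmeas::(real\<Rightarrow>'e::metric_space) measure)" "u \<in> measurable N (lborel::real measure)"
  shows "(\<lambda>w. h w (cl (u w))) \<in> borel_measurable N"
  using measurable_compose[OF measurable_Pair[OF assms] ev_meas] by simp

lemma rt_meas: "(\<lambda>z. rt k a (fst z) (snd z)) \<in> borel_measurable ((Dmeas::(real\<Rightarrow>'e::metric_space) measure) \<Otimes>\<^sub>M Dmeas)"
proof -
  let ?N = "((Dmeas::(real\<Rightarrow>'e::metric_space) measure) \<Otimes>\<^sub>M Dmeas) \<Otimes>\<^sub>M (lborel::real measure)"
  have e1: "(\<lambda>w. fst (fst w) (cl (snd w))) \<in> borel_measurable ?N"
    by (rule ev_meas_gen) measurable
  have e2: "(\<lambda>w. snd (fst w) (cl (snd w))) \<in> borel_measurable ?N"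
    by (rule ev_meas_gen) measurable
  have i1: "(\<lambda>w. indicator {a j} (fst (fst w) (cl (snd w))) :: ennreal) \<in> borel_measurable ?N" for j
    using measurable_compose[OF e1 borel_measurable_indicator[of "{a j}" borel]] by simp
  have d1: "(\<lambda>w. ennreal (dist (a j) (snd (fst w) (cl (snd w))))) \<in> borel_measurable ?N" for j
    by (intro measurable_compose[OF _ measurable_ennreal] borel_measurable_continuous_on[OF _ e2]) (intro continuous_intros)
  have "(\<lambda>w. indicator {0..<1} (snd w) * (\<Sum>j\<in>{0..k}. indicator {a j} (fst (fst w) (cl (snd w))) * ennreal (dist (a j) (snd (fst w) (cl (snd w)))))) \<in> borel_measurable ?N"
    using i1 d1 by measurable
  hence "case_prod (\<lambda>z t. indicator {0..<1} t * (\<Sum>j\<in>{0..k}. indicator {a j} (fst z (cl t)) * ennreal (dist (a j) (snd z (cl t))))) \<in> borel_measurable ?N"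
    unfolding split_beta' by simp
  from lborel.borel_measurable_nn_integral[OF this]
  show ?thesis unfolding rt_def by simp
qed



definition EE :: "real \<Rightarrow> ennreal \<Rightarrow> ennreal" where
  "EE l x = (if x = \<infinity> then 0 else ennreal (exp (- l * enn2real x)))"

lemma EE_meas[measurable]: "EE l \<in> borel_measurable borel"
  unfolding EE_def by measurable

lemma key_real:
  fixes x s l C K :: real
  assumes x: "x > 0" and s: "s \<ge> 0" and l: "l > 0" and C: "C > 0" and K: "K = ln C"
  shows "1 + max 0 (- ln x) + max 0 (- K) \<le> l * s + max 0 (ln x) + exp (- l * s) / (C * x) + max 0 K"
proof -
  have pos: "exp (- l * s) / (C * x) > 0" using x C by simp
  have "ln (exp (- l * s) / (C * x)) \<le> exp (- l * s) / (C * x) - 1" by (rule ln_le_minus_one[OF pos])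
  moreover have "ln (exp (- l * s) / (C * x)) = - l * s - K - ln x"
    using x C K by (simp add: ln_div ln_mult)
  ultimately show ?thesis by linarith
qed

lemma xlnx_bound: "x \<ge> 0 \<Longrightarrow> x * max 0 (- ln x) \<le> (1::real)"
proof (cases "x = 0")
  case False
  assume x: "x \<ge> 0"
  hence xp: "x > 0" using False by simp
  show ?thesis
  proof (cases "x \<le> 1")
    case True
    have "- ln x = ln (1/x)" using xp by (simp add: ln_div)
    also have "\<dots> \<le> 1/x - 1" using xp by (intro ln_le_minus_one) simp
    finally have "x * (- ln x) \<le> x * (1/x - 1)" using xp by (intro mult_left_mono) auto
    also have "\<dots> = 1 - x" using xp by (simp add: field_simps)
    finally show ?thesis using xp by (auto simp: max_def)
  next
    case False
    hence "ln x \<ge> 0" by simp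
    thus ?thesis by (simp add: max_def)
  qed
qed simp

lemma ennreal_plus3: "0 \<le> a \<Longrightarrow> 0 \<le> b \<Longrightarrow> 0 \<le> c \<Longrightarrow> ennreal (a + b + c) = ennreal a + ennreal b + ennreal c"
  by (simp add: ennreal_plus)
lemma ennreal_plus4: "0 \<le> a \<Longrightarrow> 0 \<le> b \<Longrightarrow> 0 \<le> c \<Longrightarrow> 0 \<le> d \<Longrightarrow> ennreal (a + b + c + d) = ennreal a + ennreal b + ennreal c + ennreal d"
  by (simp add: ennreal_plus)

lemma DV:
  fixes Q :: "('a \<times> 'b) measure" and S :: "'a measure" and T :: "'b measure"
    and psi :: "'a \<times> 'b \<Rightarrow> ennreal"
  assumes Qp: "prob_space Q" and Qs: "sets Q = sets (S \<Otimes>\<^sub>M T)"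
    and I: "mutual_inf S T Q \<le> ereal r"
    and psi[measurable]: "psi \<in> borel_measurable (S \<Otimes>\<^sub>M T)"
    and l: "l > 0" and C: "C > 0"
    and bnd: "(\<integral>\<^sup>+z. EE l (psi z) \<partial>(distr Q S fst \<Otimes>\<^sub>M distr Q T snd)) \<le> ennreal C"
  shows "ennreal ((- ln C - r) / l) \<le> (\<integral>\<^sup>+z. psi z \<partial>Q)"
proof -
  interpret Q: prob_space Q by fact
  define P where "P = distr Q S fst \<Otimes>\<^sub>M distr Q T snd"
  have mf: "fst \<in> measurable Q S" using Qs by (simp add: measurable_cong_sets[OF Qs refl])
  have ms: "snd \<in> measurable Q T" using Qs by (simp add: measurable_cong_sets[OF Qs refl])
  interpret P1: prob_space "distr Q S fst" by (rule Q.prob_space_distr[OF mf])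
  interpret P2: prob_space "distr Q T snd" by (rule Q.prob_space_distr[OF ms])
  interpret PP: pair_prob_space "distr Q S fst" "distr Q T snd" ..
  have sP: "sets P = sets Q" unfolding P_def Qs by (intro sets_pair_measure_cong) auto
  have Pp: "prob_space P" unfolding P_def by (rule PP.P.prob_space_axioms)
  interpret P: prob_space P by fact
  define p where "p = RN_deriv P Q"
  define L where "L = (\<lambda>z. ln (enn2real (p z)))"
  have ac: "absolutely_continuous P Q"
  proof (rule ccontr)
    assume "\<not> ?thesis"
    hence "mutual_inf S T Q = \<infinity>" unfolding mutual_inf_def P_def[symmetric] by (simp add: Let_def)
    with I show False by simp
  qed
  have MI: "mutual_inf S T Q = enn2ereal (\<integral>\<^sup>+ z. ennreal (max 0 (L z)) \<partial>Q)
             - enn2ereal (\<integral>\<^sup>+ z. ennreal (max 0 (- L z)) \<partial>Q)"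
    unfolding mutual_inf_def P_def[symmetric] p_def[symmetric] L_def using ac by (simp add: Let_def p_def)
  have p_meas[measurable]: "p \<in> borel_measurable P" unfolding p_def by simp
  have QP: "Q = density P p" unfolding p_def using P.density_RN_deriv[OF ac sP[symmetric]] by simp
  have pfin: "AE z in P. p z \<noteq> \<infinity>" unfolding p_def
    by (rule P.RN_deriv_finite[OF _ ac sP[symmetric]]) (rule Q.sigma_finite_measure_axioms)
  have L_meas[measurable]: "L \<in> borel_measurable P" unfolding L_def by measurable
  have psiP[measurable]: "psi \<in> borel_measurable P"
    using psi by (simp add: measurable_cong_sets[OF sP[unfolded Qs] refl])
  have intQ: "(\<integral>\<^sup>+z. f z \<partial>Q) = (\<integral>\<^sup>+z. p z * f z \<partial>P)" if f: "f \<in> borel_measurable P" for f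
    by (subst QP) (simp add: nn_integral_density f)
  define Nn where "Nn = (\<integral>\<^sup>+ z. ennreal (max 0 (- L z)) \<partial>Q)"
  define Pn where "Pn = (\<integral>\<^sup>+ z. ennreal (max 0 (L z)) \<partial>Q)"
  have Nfin: "Nn \<le> 1"
  proof -
    have "Nn = (\<integral>\<^sup>+z. p z * ennreal (max 0 (- L z)) \<partial>P)" unfolding Nn_def by (rule intQ) measurable
    also have "\<dots> \<le> (\<integral>\<^sup>+z. 1 \<partial>P)"
    proof (rule nn_integral_mono)
      fix z
      show "p z * ennreal (max 0 (- L z)) \<le> 1"
      proof (cases "p z = \<infinity>")
        case True thus ?thesis by (simp add: L_def)
      next
        case False
        then obtain x where x: "p z = ennreal x" "x \<ge> 0" by (cases "p z") auto
        have "p z * ennreal (max 0 (- L z)) = ennreal (x * max 0 (- ln x))"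
          using x by (simp add: L_def ennreal_mult)
        also have "\<dots> \<le> 1" using xlnx_bound[OF x(2)] by (simp add: ennreal_le_1)
        finally show ?thesis .
      qed
    qed
    finally show ?thesis by (simp add: P.emeasure_space_1)
  qed
  define K where "K = ln C"
  define W where "W = (\<lambda>z. EE l (psi z) * ennreal (1 / (C * enn2real (p z))))"
  have W_meas[measurable]: "W \<in> borel_measurable P" unfolding W_def by measurable
  have Wint: "(\<integral>\<^sup>+z. W z \<partial>Q) \<le> 1"
  proof -
    have "(\<integral>\<^sup>+z. W z \<partial>Q) = (\<integral>\<^sup>+z. p z * W z \<partial>P)" by (rule intQ) simp
    also have "\<dots> \<le> (\<integral>\<^sup>+z. EE l (psi z) * ennreal (1 / C) \<partial>P)"
    proof (rule nn_integral_mono_AE)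
      show "AE z in P. p z * W z \<le> EE l (psi z) * ennreal (1 / C)"
        using pfin
      proof eventually_elim
        case (elim z)
        then obtain x where x: "p z = ennreal x" "x \<ge> 0" by (cases "p z") auto
        show ?case
        proof (cases "x = 0")
          case True thus ?thesis using x by simp
        next
          case False
          have "p z * W z = EE l (psi z) * (ennreal x * ennreal (1 / (C * x)))"
            using x unfolding W_def by (simp add: mult.commute mult.left_commute)
          also have "ennreal x * ennreal (1 / (C * x)) = ennreal (x * (1 / (C * x)))"
            using x C by (intro ennreal_mult[symmetric]) auto
          also have "x * (1 / (C * x)) = 1 / C" using False by simp
          finally show ?thesis by simp
        qed
      qed
    qed
    also have "\<dots> = (\<integral>\<^sup>+z. EE l (psi z) \<partial>P) * ennreal (1 / C)"
      by (rule nn_integral_multc) measurable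
    also have "\<dots> \<le> ennreal C * ennreal (1 / C)"
      using bnd unfolding P_def by (intro mult_right_mono) auto
    also have "\<dots> = 1" using C by (simp flip: ennreal_mult)
    finally show ?thesis .
  qed
  have pQ[measurable]: "p \<in> borel_measurable Q" using p_meas by (simp add: measurable_cong_sets[OF sP refl])
  have psiQ[measurable]: "psi \<in> borel_measurable Q" using psiP by (simp add: measurable_cong_sets[OF sP refl])
  have WQ[measurable]: "W \<in> borel_measurable Q" using W_meas by (simp add: measurable_cong_sets[OF sP refl])
  have LQ[measurable]: "L \<in> borel_measurable Q" using L_meas by (simp add: measurable_cong_sets[OF sP refl])
  have AEQ: "AE z in Q. 0 < p z \<and> p z \<noteq> \<infinity>"
  proof -
    have "AE z in Q. 0 < p z" by (subst QP) (simp add: AE_density)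
    moreover have "AE z in Q. p z \<noteq> \<infinity>" by (rule absolutely_continuous_AE[OF sP[symmetric] ac pfin])
    ultimately show ?thesis by eventually_elim simp
  qed
  have pw: "AE z in Q. 1 + ennreal (max 0 (- L z)) + ennreal (max 0 (- K))
      \<le> ennreal l * psi z + ennreal (max 0 (L z)) + W z + ennreal (max 0 K)"
    using AEQ
  proof eventually_elim
    case (elim z)
    then obtain x where x: "p z = ennreal x" "x > 0" by (cases "p z") auto
    show ?case
    proof (cases "psi z = \<infinity>")
      case True thus ?thesis using l by (simp add: ennreal_mult_top)
    next
      case False
      then obtain s where s: "psi z = ennreal s" "s \<ge> 0" by (cases "psi z") auto
      have Wz: "W z = ennreal (exp (- l * s) / (C * x))"
        unfolding W_def EE_def using s x C by (simp add: ennreal_mult[symmetric] divide_inverse)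
      have "1 + ennreal (max 0 (- L z)) + ennreal (max 0 (- K)) = ennreal (1 + max 0 (- ln x) + max 0 (- K))"
        using x by (subst ennreal_plus3) (auto simp: L_def)
      also have "\<dots> \<le> ennreal (l * s + max 0 (ln x) + exp (- l * s) / (C * x) + max 0 K)"
        by (rule ennreal_leI, rule key_real) (use x s l C in \<open>auto simp: K_def\<close>)
      also have "\<dots> = ennreal l * psi z + ennreal (max 0 (L z)) + W z + ennreal (max 0 K)"
        using x s l C Wz by (subst ennreal_plus4) (auto simp: L_def ennreal_mult)
      finally show ?thesis .
    qed
  qed
  have "(\<integral>\<^sup>+z. 1 + ennreal (max 0 (- L z)) + ennreal (max 0 (- K)) \<partial>Q)
      \<le> (\<integral>\<^sup>+z. ennreal l * psi z + ennreal (max 0 (L z)) + W z + ennreal (max 0 K) \<partial>Q)"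
    by (rule nn_integral_mono_AE[OF pw])
  also have "(\<integral>\<^sup>+z. ennreal l * psi z + ennreal (max 0 (L z)) + W z + ennreal (max 0 K) \<partial>Q)
      = ennreal l * (\<integral>\<^sup>+z. psi z \<partial>Q) + Pn + (\<integral>\<^sup>+z. W z \<partial>Q) + ennreal (max 0 K)"
    unfolding Pn_def
    by (simp add: nn_integral_add nn_integral_cmult Q.emeasure_space_1)
  also have "(\<integral>\<^sup>+z. 1 + ennreal (max 0 (- L z)) + ennreal (max 0 (- K)) \<partial>Q)
      = 1 + Nn + ennreal (max 0 (- K))"
    unfolding Nn_def
    by (simp add: nn_integral_add Q.emeasure_space_1)
  finally have main: "1 + Nn + ennreal (max 0 (- K))
      \<le> ennreal l * (\<integral>\<^sup>+z. psi z \<partial>Q) + Pn + 1 + ennreal (max 0 K)"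
    using Wint by (meson add_left_mono add_right_mono order_trans)
  show ?thesis
  proof (cases "(\<integral>\<^sup>+z. psi z \<partial>Q) = \<infinity>")
    case True thus ?thesis by simp
  next
    case False
    then obtain pr where psr: "(\<integral>\<^sup>+z. psi z \<partial>Q) = ennreal pr" "pr \<ge> 0"
      by (cases "(\<integral>\<^sup>+z. psi z \<partial>Q)") auto
    obtain nr where nr: "Nn = ennreal nr" "nr \<ge> 0" using Nfin by (cases Nn) (auto simp: top_unique)
    have "enn2ereal Pn - ereal nr \<le> ereal r" using I MI nr unfolding Pn_def Nn_def by simp
    hence Pnle: "enn2ereal Pn \<le> ereal (r + nr)"
      by (cases "enn2ereal Pn") auto
    then obtain qr where qr: "Pn = ennreal qr" "qr \<ge> 0" "qr \<le> r + nr"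
      by (cases Pn) (auto simp: ennreal_top_neq_one)
    have "ennreal (1 + nr + max 0 (- K)) \<le> ennreal (l * pr + qr + 1 + max 0 K)"
      using main psr nr qr l by (simp add: ennreal_plus ennreal_mult)
    hence "1 + nr + max 0 (- K) \<le> l * pr + qr + 1 + max 0 K"
      using psr qr l by (subst (asm) ennreal_le_iff) auto
    hence "- K - r \<le> l * pr" using qr by (auto simp: max_def split: if_splits)
    hence "(- ln C - r) / l \<le> pr" using l by (simp add: K_def divide_le_eq mult.commute)
    thus ?thesis using psr by (simp add: ennreal_leI)
  qed
qed



lemma helly:
  fixes F :: "real \<Rightarrow> ennreal" and e :: real
  assumes e: "e > 0" and pw: "\<And>y y'. y \<in> J \<Longrightarrow> y' \<in> J \<Longrightarrow> ennreal (e * \<bar>y - y'\<bar>) \<le> F y + F y'"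
  shows "\<exists>m. \<forall>y\<in>J. ennreal (e * \<bar>y - m\<bar>) \<le> F y"
proof (cases "\<exists>y0\<in>J. F y0 \<noteq> \<infinity>")
  case False thus ?thesis by auto
next
  case True
  then obtain y0 where y0: "y0 \<in> J" "F y0 \<noteq> \<infinity>" by blast
  define S where "S = {y\<in>J. F y \<noteq> \<infinity>}"
  define f where "f y = enn2real (F y)" for y
  have Ff: "y \<in> S \<Longrightarrow> F y = ennreal (f y)" for y unfolding S_def f_def by (cases "F y") auto
  have f0: "f y \<ge> 0" for y unfolding f_def by simp
  have pwr: "e * \<bar>y - y'\<bar> \<le> f y + f y'" if "y \<in> S" "y' \<in> S" for y y'
  proof -
    have "ennreal (e * \<bar>y - y'\<bar>) \<le> ennreal (f y + f y')"
      using pw[of y y'] that Ff[of y] Ff[of y'] f0 by (auto simp: S_def ennreal_plus)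
    thus ?thesis using f0[of y] f0[of y'] by (subst (asm) ennreal_le_iff) auto
  qed
  define A where "A = (\<lambda>y. y - f y / e) ` S"
  have y0S: "y0 \<in> S" using y0 by (simp add: S_def)
  have ub: "y' - f y' / e \<le> y + f y / e" if "y \<in> S" "y' \<in> S" for y y'
  proof -
    have "e * \<bar>y - y'\<bar> \<le> f y + f y'" by (rule pwr[OF that])
    hence "e * (y' - y) \<le> f y + f y'" using e by (smt (verit) mult_left_mono abs_ge_self mult.commute)
    hence "y' - y \<le> (f y + f y') / e" using e by (simp add: le_divide_eq mult.commute)
    thus ?thesis by (simp add: add_divide_distrib)
  qed
  have bdd: "bdd_above A" unfolding A_def bdd_above_def using ub[OF y0S] by blast
  have ne: "A \<noteq> {}" using y0S by (auto simp: A_def)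
  define m where "m = Sup A"
  show ?thesis
  proof (intro exI ballI)
    fix y assume yJ: "y \<in> J"
    show "ennreal (e * \<bar>y - m\<bar>) \<le> F y"
    proof (cases "y \<in> S")
      case False thus ?thesis using yJ by (auto simp: S_def)
    next
      case True
      have "y - f y / e \<le> m" unfolding m_def using True bdd by (intro cSup_upper) (auto simp: A_def)
      moreover have "m \<le> y + f y / e" unfolding m_def using ne ub[OF True] by (intro cSup_least) (auto simp: A_def)
      ultimately have "\<bar>y - m\<bar> \<le> f y / e" by linarith
      hence "e * \<bar>y - m\<bar> \<le> f y" using e by (simp add: le_divide_eq mult.commute)
      thus ?thesis using Ff[OF True] by (simp add: ennreal_leI)
    qed
  qed
qed

lemma int_expdens: "c > 0 \<Longrightarrow> (\<integral>\<^sup>+x. ennreal (exponential_density c x) \<partial>lborel) = 1"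
proof -
  assume c: "c > 0"
  interpret prob_space "density lborel (exponential_density c)" by (rule prob_space_exponential_density[OF c])
  have "emeasure (density lborel (exponential_density c)) UNIV = 1" using emeasure_space_1 by simp
  thus ?thesis by (simp add: emeasure_density)
qed

lemma int_exp_abs:
  fixes c m :: real assumes c: "c > 0"
  shows "(\<integral>\<^sup>+y. ennreal (exp (- c * \<bar>y - m\<bar>)) \<partial>lborel) \<le> ennreal (2 / c)"
proof -
  have m1: "(\<integral>\<^sup>+x. ennreal (exponential_density c (x - m)) \<partial>lborel) = 1"
    using nn_integral_real_affine[of "\<lambda>x. ennreal (exponential_density c x)" 1 "- m"] int_expdens[OF c] by simp
  have m2: "(\<integral>\<^sup>+x. ennreal (exponential_density c (m - x)) \<partial>lborel) = 1"
    using nn_integral_real_affine[of "\<lambda>x. ennreal (exponential_density c x)" "-1" m] int_expdens[OF c] by simp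
  have "(\<integral>\<^sup>+y. ennreal (exp (- c * \<bar>y - m\<bar>)) \<partial>lborel)
     \<le> (\<integral>\<^sup>+y. ennreal (1/c) * (ennreal (exponential_density c (y - m)) + ennreal (exponential_density c (m - y))) \<partial>lborel)"
  proof (rule nn_integral_mono)
    fix y
    have "exp (- c * \<bar>y - m\<bar>) \<le> (1/c) * (exponential_density c (y - m) + exponential_density c (m - y))"
      using c by (auto simp: exponential_density_def field_simps abs_if mult.commute)
    also have "\<dots> \<ge> 0" using c by (auto simp: exponential_density_def)
    ultimately show "ennreal (exp (- c * \<bar>y - m\<bar>)) \<le> ennreal (1/c) * (ennreal (exponential_density c (y - m)) + ennreal (exponential_density c (m - y)))"
      using c by (simp add: ennreal_mult[symmetric] ennreal_plus[symmetric] exponential_density_nonneg ennreal_leI del: ennreal_plus)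
  qed
  also have "\<dots> = ennreal (1/c) * 2"
    by (simp add: nn_integral_cmult nn_integral_add m1 m2 one_add_one)
  also have "\<dots> = ennreal (2/c)" using c by (simp add: ennreal_mult[symmetric] ennreal_numeral[symmetric] del: ennreal_numeral)
  finally show ?thesis .
qed



lemma mem_dyad:
  assumes j: "j \<ge> 1"
  shows "t \<in> dyad (m, j) \<longleftrightarrow> \<lfloor>2^m * t\<rfloor> = int j - 1"
proof -
  have p: "(0::real) < 2^m" by simp
  have "t \<in> dyad (m, j) \<longleftrightarrow> real j - 1 \<le> 2^m * t \<and> 2^m * t < real j"
    unfolding dyad_def using p by (simp add: divide_le_eq less_divide_eq mult.commute)
  also have "\<dots> \<longleftrightarrow> \<lfloor>2^m * t\<rfloor> = int j - 1"
    using j by (simp add: floor_eq_iff)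
  finally show ?thesis .
qed

lemma floor_lvl:
  fixes x :: real assumes "m' \<le> m"
  shows "\<lfloor>2^m' * x\<rfloor> = \<lfloor>2^m * x\<rfloor> div 2^(m - m')"
proof -
  have e: "(2::real)^m = 2^m' * 2^(m-m')" using assms by (simp add: power_add[symmetric])
  have "\<lfloor>2^m * x / real_of_int (2^(m - m'))\<rfloor> = \<lfloor>2^m * x\<rfloor> div 2^(m - m')"
    by (rule floor_divide_real_eq_div) simp
  moreover have "2^m * x / real_of_int (2^(m - m')) = 2^m' * x" using e by simp
  ultimately show ?thesis by simp
qed

lemma anc_mem:
  assumes j: "j \<ge> 1" and t: "t \<in> dyad (m, j)" and mm: "m' \<le> m"
  shows "t \<in> dyad (m', (j - 1) div 2^(m - m') + 1)"
proof -
  have "\<lfloor>2^m * t\<rfloor> = int j - 1" using mem_dyad[OF j] t by simp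
  hence "\<lfloor>2^m' * t\<rfloor> = (int j - 1) div 2^(m - m')" using floor_lvl[OF mm, of t] by simp
  also have "(int j - 1) = int (j - 1)" using j by simp
  also have "int (j - 1) div 2^(m - m') = int ((j - 1) div 2^(m - m'))" by (simp add: zdiv_int)
  finally show ?thesis by (subst mem_dyad) auto
qed

lemma tree_anc:
  assumes "in_tree T mj"
  shows "snd mj \<ge> 1 \<and> (\<forall>m'<fst mj. 2 \<le> card (T \<inter> dyad (m', (snd mj - 1) div 2^(fst mj - m') + 1)))"
  using assms
proof (induction rule: in_tree.induct)
  case root thus ?case by simp
next
  case (child m j c)
  have j: "j \<ge> 1" using child.IH by simp
  have c: "c - 1 = 2 * (j - 1) \<or> c - 1 = 2 * (j - 1) + 1" using child.hyps(3) j by auto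
  have cdiv: "(c - 1) div 2 = j - 1" using c by auto
  have "c \<ge> 1" using child.hyps(3) j by auto
  moreover have "2 \<le> card (T \<inter> dyad (m', (c - 1) div 2^(Suc m - m') + 1))" if m': "m' < Suc m" for m'
  proof (cases "m' = m")
    case True
    thus ?thesis using cdiv j child.hyps(2) by simp
  next
    case False
    hence mm: "m' < m" using m' by simp
    have "(c - 1) div 2^(Suc m - m') = ((c - 1) div 2) div 2^(m - m')"
      using mm by (simp add: Suc_diff_le div_mult2_eq)
    thus ?thesis using cdiv child.IH mm by simp
  qed
  ultimately show ?case by simp
qed

definition node :: "nat \<Rightarrow> real \<Rightarrow> nat \<times> nat" where
  "node m t = (m, nat \<lfloor>2^m * t\<rfloor> + 1)"

lemma node_mem: "t \<ge> 0 \<Longrightarrow> t \<in> dyad (node m t)"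
  unfolding node_def by (subst mem_dyad) auto

lemma node_in_tree:
  assumes t: "t \<ge> 0" and t1: "t < 1" and h: "\<forall>m'<m. 2 \<le> card (T \<inter> dyad (node m' t))"
  shows "in_tree T (node m t)"
  using h
proof (induction m)
  case 0
  have "\<lfloor>t\<rfloor> = 0" using t t1 by (simp add: floor_eq_iff)
  hence "node 0 t = (0, 1)" by (simp add: node_def)
  thus ?case using in_tree.root[of T] by simp
next
  case (Suc m)
  have IH: "in_tree T (node m t)" using Suc by simp
  have c2: "2 \<le> card (T \<inter> dyad (node m t))" using Suc.prems by simp
  have fl: "\<lfloor>2^m * t\<rfloor> = \<lfloor>2^Suc m * t\<rfloor> div 2" using floor_lvl[of m "Suc m" t] by simp
  have nn: "\<lfloor>2^Suc m * t\<rfloor> \<ge> 0" using t by simp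
  define n where "n = nat \<lfloor>2^Suc m * t\<rfloor>"
  have "nat \<lfloor>2^m * t\<rfloor> = n div 2" unfolding n_def fl using nn by (simp add: nat_div_distrib)
  hence "n + 1 \<in> {2 * (nat \<lfloor>2^m * t\<rfloor> + 1) - 1, 2 * (nat \<lfloor>2^m * t\<rfloor> + 1)}" by auto
  from in_tree.child[OF IH[unfolded node_def] c2[unfolded node_def] this]
  show ?case unfolding node_def n_def by simp
qed

lemma dyad_width:
  assumes "x \<in> dyad (m, j)" "y \<in> dyad (m, j)" shows "\<bar>x - y\<bar> < 1 / 2^m"
proof -
  have p: "(0::real) < 2^m" by simp
  have "real j - 1 \<le> 2^m * x" "2^m * x < real j" "real j - 1 \<le> 2^m * y" "2^m * y < real j"
    using assms p unfolding dyad_def by (simp_all add: divide_le_eq less_divide_eq mult.commute)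
  hence "\<bar>2^m * x - 2^m * y\<bar> < 1" by linarith
  hence "2^m * \<bar>x - y\<bar> < 1" by (simp add: abs_mult flip: right_diff_distrib)
  thus ?thesis using p by (simp add: less_divide_eq mult.commute)
qed

lemma leaf_disj_le:
  assumes A: "(m1, j1) \<in> one_point_leaves T" and B: "(m2, j2) \<in> one_point_leaves T"
    and x: "x \<in> dyad (m1, j1)" "x \<in> dyad (m2, j2)" and mm: "m1 \<le> m2"
  shows "(m1, j1) = (m2, j2)"
proof -
  have tA: "in_tree T (m1, j1)" "card (T \<inter> dyad (m1, j1)) = 1" using A by (auto simp: one_point_leaves_def)
  have tB: "in_tree T (m2, j2)" "card (T \<inter> dyad (m2, j2)) = 1" using B by (auto simp: one_point_leaves_def)
  have j1: "j1 \<ge> 1" using tree_anc[OF tA(1)] by simp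
  have j2: "j2 \<ge> 1" using tree_anc[OF tB(1)] by simp
  have xa: "x \<in> dyad (m1, (j2 - 1) div 2^(m2 - m1) + 1)" by (rule anc_mem[OF j2 x(2) mm])
  have "\<lfloor>2^m1 * x\<rfloor> = int j1 - 1" using mem_dyad[OF j1] x(1) by simp
  moreover have "\<lfloor>2^m1 * x\<rfloor> = int ((j2 - 1) div 2^(m2 - m1) + 1) - 1" using mem_dyad[of "(j2 - 1) div 2^(m2 - m1) + 1"] xa by simp
  ultimately have jj: "j1 = (j2 - 1) div 2^(m2 - m1) + 1" by simp
  show ?thesis
  proof (cases "m1 = m2")
    case True thus ?thesis using jj j2 by simp
  next
    case False
    hence "m1 < m2" using mm by simp
    hence "2 \<le> card (T \<inter> dyad (m1, (j2 - 1) div 2^(m2 - m1) + 1))" using tree_anc[OF tB(1)] by simp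
    thus ?thesis using jj tA(2) by simp
  qed
qed

lemma leaf_disj:
  assumes A: "I \<in> one_point_leaves T" and B: "J \<in> one_point_leaves T"
    and x: "x \<in> dyad I" "x \<in> dyad J"
  shows "I = J"
proof -
  obtain m1 j1 m2 j2 where I: "I = (m1, j1)" and J: "J = (m2, j2)" by (cases I, cases J) auto
  show ?thesis
  proof (cases "m1 \<le> m2")
    case True thus ?thesis using leaf_disj_le[of m1 j1 T m2 j2 x] A B x I J by simp
  next
    case False thus ?thesis using leaf_disj_le[of m2 j2 T m1 j1 x] A B x I J by simp
  qed
qed

lemma leaf_node:
  assumes A: "mj \<in> one_point_leaves T"
  shows "\<exists>t. T \<inter> dyad mj = {t} \<and> mj = node (fst mj) t"
proof -
  obtain m j where mj: "mj = (m, j)" by (cases mj)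
  have tA: "in_tree T (m, j)" "card (T \<inter> dyad (m, j)) = 1" using A mj by (auto simp: one_point_leaves_def)
  have j: "j \<ge> 1" using tree_anc[OF tA(1)] by simp
  obtain t where t: "T \<inter> dyad (m, j) = {t}" using tA(2) by (auto simp: card_1_singleton_iff)
  have "\<lfloor>2^m * t\<rfloor> = int j - 1" using mem_dyad[OF j] t by auto
  hence "node m t = (m, j)" using j by (simp add: node_def)
  thus ?thesis using t mj by auto
qed

lemma exists_small_level:
  assumes T: "finite T" and tT: "t \<in> T" and t0: "t \<ge> 0"
  shows "\<exists>m. card (T \<inter> dyad (node m t)) \<le> 1"
proof (cases "T - {t} = {}")
  case True
  hence "T \<inter> dyad (node 0 t) \<subseteq> {t}" by auto
  hence "card (T \<inter> dyad (node 0 t)) \<le> card {t}" by (intro card_mono) auto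
  thus ?thesis by auto
next
  case False
  define \<delta> where "\<delta> = Min ((\<lambda>t'. \<bar>t' - t\<bar>) ` (T - {t}))"
  have dpos: "\<delta> > 0" unfolding \<delta>_def using T False by (subst Min_gr_iff) auto
  have dle: "\<delta> \<le> \<bar>t' - t\<bar>" if "t' \<in> T - {t}" for t' unfolding \<delta>_def using T that by (intro Min_le) auto
  obtain m where m: "(1/2::real)^m < \<delta>" using real_arch_pow_inv[OF dpos, of "1/2"] by auto
  have "T \<inter> dyad (node m t) \<subseteq> {t}"
  proof
    fix t' assume t': "t' \<in> T \<inter> dyad (node m t)"
    have w: "\<bar>t' - t\<bar> < 1 / 2^m" using dyad_width[of t' m "snd (node m t)" t] t' node_mem[OF t0, of m]
      by (simp add: node_def)
    show "t' \<in> {t}"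
    proof (rule ccontr)
      assume "t' \<notin> {t}"
      hence "\<delta> \<le> \<bar>t' - t\<bar>" using t' by (intro dle) auto
      thus False using w m by (simp add: power_divide)
    qed
  qed
  hence "card (T \<inter> dyad (node m t)) \<le> card {t}" by (intro card_mono) auto
  thus ?thesis by auto
qed

lemma node_unique:
  assumes j: "j \<ge> 1" and t: "t \<in> dyad (m, j)"
  shows "node m t = (m, j)"
proof -
  have "\<lfloor>2^m * t\<rfloor> = int j - 1" using mem_dyad[OF j] t by simp
  thus ?thesis using j by (simp add: node_def)
qed

definition mu :: "real set \<Rightarrow> real \<Rightarrow> nat" where
  "mu T t = (LEAST m. card (T \<inter> dyad (node m t)) \<le> 1)"

lemma leaves_bij:
  assumes T: "finite T" and T01: "T \<subseteq> {0..<1}"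
  shows "bij_betw (\<lambda>t. node (mu T t) t) T (one_point_leaves T)"
proof -
  have phiS: "node (mu T t) t \<in> one_point_leaves T" and c1: "card (T \<inter> dyad (node (mu T t) t)) = 1"
    if tT: "t \<in> T" for t
  proof -
    have t0: "t \<ge> 0" "t < 1" using tT T01 by auto
    have le1: "card (T \<inter> dyad (node (mu T t) t)) \<le> 1"
      unfolding mu_def by (rule LeastI_ex) (rule exists_small_level[OF T tT t0(1)])
    have "\<forall>m'<mu T t. 2 \<le> card (T \<inter> dyad (node m' t))"
    proof (intro allI impI)
      fix m' assume "m' < mu T t"
      hence "\<not> card (T \<inter> dyad (node m' t)) \<le> 1" unfolding mu_def by (rule not_less_Least)
      thus "2 \<le> card (T \<inter> dyad (node m' t))" by simp
    qed
    hence tr: "in_tree T (node (mu T t) t)" by (rule node_in_tree[OF t0])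
    have "t \<in> T \<inter> dyad (node (mu T t) t)" using tT node_mem[OF t0(1)] by simp
    hence "card (T \<inter> dyad (node (mu T t) t)) \<noteq> 0" using T by auto
    thus "card (T \<inter> dyad (node (mu T t) t)) = 1" using le1 by simp
    thus "node (mu T t) t \<in> one_point_leaves T" using tr by (simp add: one_point_leaves_def)
  qed
  show ?thesis unfolding bij_betw_def
  proof (intro conjI inj_onI equalityI subsetI)
    fix t t' assume tT: "t \<in> T" and t'T: "t' \<in> T" and eq: "node (mu T t) t = node (mu T t') t'"
    have "t \<in> T \<inter> dyad (node (mu T t) t)" "t' \<in> T \<inter> dyad (node (mu T t) t)"
      using tT t'T T01 node_mem eq by (auto simp del: Int_iff) (metis IntI atLeastLessThan_iff node_mem subsetD)+
    moreover obtain x where "T \<inter> dyad (node (mu T t) t) = {x}" using c1[OF tT] by (auto simp: card_1_singleton_iff)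
    ultimately show "t = t'" by (metis singletonD)
  next
    fix x assume "x \<in> (\<lambda>t. node (mu T t) t) ` T" thus "x \<in> one_point_leaves T" using phiS by auto
  next
    fix mj assume mjS: "mj \<in> one_point_leaves T"
    obtain t where t: "T \<inter> dyad mj = {t}" "mj = node (fst mj) t" using leaf_node[OF mjS] by blast
    obtain m j where mj: "mj = (m, j)" by (cases mj)
    have tT: "t \<in> T" and tD: "t \<in> dyad (m, j)" using t mj by auto
    have t0: "t \<ge> 0" using tT T01 by auto
    have tr: "in_tree T (m, j)" "card (T \<inter> dyad (m, j)) = 1" using mjS mj by (auto simp: one_point_leaves_def)
    have j: "j \<ge> 1" using tree_anc[OF tr(1)] by simp
    have nm: "node m t = (m, j)" by (rule node_unique[OF j tD])
    have "mu T t \<le> m" unfolding mu_def using tr(2) nm by (intro Least_le) simp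
    moreover have "\<not> mu T t < m"
    proof
      assume lt: "mu T t < m"
      have c2: "2 \<le> card (T \<inter> dyad (mu T t, (j - 1) div 2^(m - mu T t) + 1))"
        using tree_anc[OF tr(1)] lt by simp
      have "t \<in> dyad (mu T t, (j - 1) div 2^(m - mu T t) + 1)" using anc_mem[OF j tD] lt by simp
      hence "node (mu T t) t = (mu T t, (j - 1) div 2^(m - mu T t) + 1)" by (intro node_unique) auto
      thus False using c1[OF tT] c2 by simp
    qed
    ultimately have "mu T t = m" by simp
    thus "mj \<in> (\<lambda>t. node (mu T t) t) ` T" using nm mj tT by (intro image_eqI[of _ _ t]) auto
  qed
qed

lemma dyad_left_mem: "dyad_left I \<in> dyad I"
  unfolding dyad_def dyad_left_def by (simp add: divide_strict_right_mono)

lemma dyad_eq: "dyad I = {dyad_left I ..< dyad_left I + dyad_len I}"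
  unfolding dyad_def dyad_left_def dyad_len_def by (simp add: add_divide_distrib[symmetric])

lemma pi_k_props:
  assumes ts01: "set ts \<subseteq> {0..<1}"
  shows "distinct (pi_k ts) \<and> set (pi_k ts) = one_point_leaves (set ts) \<and> sorted_wrt (\<lambda>I J. dyad_left I < dyad_left J) (pi_k ts)"
proof -
  define T where "T = set ts"
  have T: "finite T" and T01: "T \<subseteq> {0..<1}" using ts01 by (auto simp: T_def)
  define S where "S = one_point_leaves T"
  have bij: "bij_betw (\<lambda>t. node (mu T t) t) T S" unfolding S_def by (rule leaves_bij[OF T T01])
  have finS: "finite S" using bij T bij_betw_finite by blast
  have inj: "inj_on dyad_left S"
  proof (rule inj_onI)
    fix I J assume "I \<in> S" "J \<in> S" "dyad_left I = dyad_left J"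
    thus "I = J" using leaf_disj[of I T J "dyad_left I"] dyad_left_mem[of I] dyad_left_mem[of J] by (simp add: S_def)
  qed
  define P where "P = (\<lambda>Is. distinct Is \<and> set Is = S \<and> sorted_wrt (\<lambda>I J. dyad_left I < dyad_left J) Is)"
  obtain xs where xs: "sorted_wrt (<) xs" "set xs = dyad_left ` S"
    using ex1_sorted_list_for_set_if_finite[of "dyad_left ` S"] finS by blast
  have uniq: "map dyad_left Is = xs" if "P Is" for Is
  proof -
    have "sorted_wrt (<) (map dyad_left Is)" using that unfolding P_def by (simp add: sorted_wrt_map)
    moreover have "set (map dyad_left Is) = dyad_left ` S" using that unfolding P_def by simp
    ultimately show ?thesis using ex1_sorted_list_for_set_if_finite[of "dyad_left ` S"] finS xs by blast
  qed
  define Is0 where "Is0 = map (the_inv_into S dyad_left) xs"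
  have m0: "map dyad_left Is0 = xs" unfolding Is0_def map_map
  proof (rule map_idI)
    fix y assume "y \<in> set xs"
    hence "y \<in> dyad_left ` S" using xs(2) by simp
    thus "(dyad_left \<circ> the_inv_into S dyad_left) y = y" using f_the_inv_into_f[OF inj] by simp
  qed
  have "the_inv_into S dyad_left ` (dyad_left ` S) = S"
    by (simp add: image_image the_inv_into_f_f[OF inj] cong: image_cong)
  hence "set Is0 = S" unfolding Is0_def using xs(2) by simp
  moreover have "distinct Is0" using m0 xs(1) by (metis distinct_map strict_sorted_iff)
  moreover have "sorted_wrt (\<lambda>I J. dyad_left I < dyad_left J) Is0" using m0 xs(1) by (metis sorted_wrt_map)
  ultimately have P0: "P Is0" unfolding P_def by simp
  have ex1: "\<exists>!Is. P Is"
  proof (rule ex1I[of _ Is0])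
    show "P Is0" by (rule P0)
    fix Is assume "P Is"
    hence "map dyad_left Is = map dyad_left Is0" using uniq P0 by simp
    moreover have "inj_on dyad_left (set Is \<union> set Is0)" using inj \<open>P Is\<close> P0 unfolding P_def by simp
    ultimately show "Is = Is0" using map_inj_on by blast
  qed
  have "P (THE Is. P Is)" using ex1 by (rule theI')
  moreover have "pi_k ts = (THE Is. P Is)" unfolding pi_k_def P_def S_def T_def by simp
  ultimately show ?thesis unfolding P_def S_def T_def by simp
qed

lemma leaf_sub01:
  assumes T01: "T \<subseteq> {0..<1}" and I: "I \<in> one_point_leaves T"
  shows "dyad I \<subseteq> {0..<1}"
proof -
  obtain t where t: "T \<inter> dyad I = {t}" "I = node (fst I) t" using leaf_node[OF I] by blast
  define m where "m = fst I"
  have t01: "0 \<le> t" "t < 1" using t T01 by auto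
  define n where "n = \<lfloor>2^m * t\<rfloor>"
  have n0: "n \<ge> 0" using t01 unfolding n_def by simp
  have "real_of_int n \<le> 2^m * t" unfolding n_def by simp
  also have "\<dots> < 2^m" using t01 by simp
  finally have "real_of_int n < real_of_int (2^m)" by simp
  hence "n < 2^m" by (simp only: of_int_less_iff)
  hence "n + 1 \<le> 2^m" by simp
  hence "real_of_int (n + 1) \<le> real_of_int (2^m)" by (simp only: of_int_le_iff)
  hence n1: "real_of_int n + 1 \<le> 2^m" by simp
  have I2: "I = (m, nat n + 1)" using t unfolding node_def m_def n_def by simp
  have "real (nat n + 1) - 1 = real_of_int n" using n0 by simp
  moreover have "real (nat n + 1) = real_of_int n + 1" using n0 by simp
  ultimately have DI: "dyad I = {real_of_int n / 2^m ..< (real_of_int n + 1) / 2^m}" unfolding I2 dyad_def by (simp add: add.commute)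
  have p: "(0::real) < 2^m" by simp
  show ?thesis
  proof
    fix x assume "x \<in> dyad I"
    hence x: "real_of_int n / 2^m \<le> x" "x < (real_of_int n + 1) / 2^m" using DI by auto
    have "0 \<le> real_of_int n / 2^m" using n0 p by simp
    moreover have "(real_of_int n + 1) / 2^m \<le> 1" using n1 p by simp
    ultimately show "x \<in> {0..<1}" using x by (simp only: atLeastLessThan_iff) linarith
  qed
qed

lemma im_pi_props:
  assumes "Is \<in> im_pi k"
  shows "length Is = k" "\<And>i. i < k \<Longrightarrow> dyad (Is ! i) \<subseteq> {0..<1}"
    "\<And>i i' x y. i < i' \<Longrightarrow> i' < k \<Longrightarrow> x \<in> dyad (Is ! i) \<Longrightarrow> y \<in> dyad (Is ! i') \<Longrightarrow> x < y"
proof -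
  obtain ts where ts: "Is = pi_k ts" "length ts = k" "distinct ts" "set ts \<subseteq> {0..<1}"
    using assms unfolding im_pi_def by blast
  define T where "T = set ts"
  have T: "finite T" and T01: "T \<subseteq> {0..<1}" using ts by (auto simp: T_def)
  have P: "distinct Is" "set Is = one_point_leaves T" "sorted_wrt (\<lambda>I J. dyad_left I < dyad_left J) Is"
    using pi_k_props[OF ts(4)] ts(1) by (auto simp: T_def)
  have "card (one_point_leaves T) = card T" using bij_betw_same_card[OF leaves_bij[OF T T01]] by simp
  also have "card T = k" using ts distinct_card by (auto simp: T_def)
  finally show len: "length Is = k" using P distinct_card by metis
  have mem: "i < k \<Longrightarrow> Is ! i \<in> one_point_leaves T" for i using P(2) len by (metis nth_mem)
  show "\<And>i. i < k \<Longrightarrow> dyad (Is ! i) \<subseteq> {0..<1}" using leaf_sub01[OF T01] mem by blast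
  fix i i' x y assume ii: "i < i'" "i' < k" and x: "x \<in> dyad (Is ! i)" and y: "y \<in> dyad (Is ! i')"
  have lt: "dyad_left (Is ! i) < dyad_left (Is ! i')" using sorted_wrt_nth_less[OF P(3) ii(1)] ii len by simp
  have ne: "Is ! i \<noteq> Is ! i'" using P(1) ii len by (simp add: nth_eq_iff_index_eq)
  show "x < y"
  proof (rule ccontr)
    assume "\<not> x < y"
    have "dyad_left (Is ! i') \<in> dyad (Is ! i')" by (rule dyad_left_mem)
    moreover have "dyad_left (Is ! i') \<in> dyad (Is ! i)"
      using x y lt \<open>\<not> x < y\<close> unfolding dyad_eq by auto
    ultimately have "Is ! i = Is ! i'" using leaf_disj[OF mem[of i] mem[of i'], of "dyad_left (Is ! i')"] ii by simp
    thus False using ne by simp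
  qed
qed



lemma step_in_Dset:
  fixes y :: "nat \<Rightarrow> real" and A :: "nat set"
  assumes A: "finite A"
  shows "restrict (\<lambda>t. a (card {j \<in> A. y j \<le> t})) {0..<1} \<in> Dset"
proof -
  define V where "V = y ` A \<inter> {0<..<1}"
  have finV: "finite V" using A by (simp add: V_def)
  define xs where "xs = sorted_list_of_set V"
  have xs: "sorted_wrt (<) xs" "set xs = V" using finV by (simp_all add: xs_def)
  define sl where "sl = (0::real) # xs @ [1]"
  define n where "n = Suc (length xs)"
  define s where "s i = sl ! i" for i
  have len: "length sl = Suc n" by (simp add: sl_def n_def)
  have el: "\<forall>x\<in>set xs. 0 < x \<and> x < 1" using xs(2) by (auto simp: V_def)
  have slsort: "sorted_wrt (<) sl" unfolding sl_def using xs(1) el by (simp add: sorted_wrt_append)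
  have smono: "s a < s b" if "a < b" "b \<le> n" for a b
    unfolding s_def using sorted_wrt_nth_less[OF slsort that(1)] that len by simp
  have smono_iff: "s a < s b \<Longrightarrow> a \<le> n \<Longrightarrow> b \<le> n \<Longrightarrow> a < b" for a b
    using smono[of b a] by (cases "a < b") (auto simp: not_less le_less)
  have s0: "s 0 = 0" by (simp add: s_def sl_def)
  have sn: "s n = 1" by (simp add: s_def sl_def n_def nth_append)
  have sin: "s (Suc q) = xs ! q" if "q < length xs" for q using that by (simp add: s_def sl_def nth_append)
  define f where "f = restrict (\<lambda>t. a (card {j \<in> A. y j \<le> t})) {0..<1}"
  have "f \<in> extensional {0..<1}" unfolding f_def by simp
  moreover have "\<forall>j<n. s j < s (Suc j)" using smono by simp
  moreover have "\<forall>j<n. \<forall>t\<in>{s j..<s (Suc j)}. f t = f (s j)"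
  proof (intro allI impI ballI)
    fix i t assume i: "i < n" and t: "t \<in> {s i..<s (Suc i)}"
    have si0: "0 \<le> s i" using s0 smono[of 0 i] i by (cases "i = 0") auto
    have si1: "s (Suc i) \<le> 1" using sn smono[of "Suc i" n] i by (cases "Suc i = n") auto
    have t01: "t \<in> {0..<1}" using t si0 si1 by auto
    have si01: "s i \<in> {0..<1}" using si0 smono[of i n] i sn by auto
    have "{j \<in> A. y j \<le> t} = {j \<in> A. y j \<le> s i}"
    proof (intro Collect_cong conj_cong refl iffI)
      fix j assume jA: "j \<in> A" and yt: "y j \<le> t"
      show "y j \<le> s i"
      proof (rule ccontr)
        assume "\<not> y j \<le> s i"
        hence gt: "s i < y j" by simp
        have "y j \<in> V" using jA gt si0 yt t si1 by (auto simp: V_def)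
        then obtain q where q: "q < length xs" "xs ! q = y j" using xs(2) by (metis in_set_conv_nth)
        have "i < Suc q" using smono_iff[of i "Suc q"] gt sin[OF q(1)] q i by (simp add: n_def)
        moreover have "Suc q < Suc i" using smono_iff[of "Suc q" "Suc i"] sin[OF q(1)] q yt t i by (simp add: n_def)
        ultimately show False by simp
      qed
    next
      fix j assume "y j \<le> s i" thus "y j \<le> t" using t by simp
    qed
    thus "f t = f (s i)" unfolding f_def using t01 si01 by simp
  qed
  ultimately have "f \<in> extensional {0..<1} \<and> (\<exists>(n::nat) (s::nat \<Rightarrow> real). s 0 = 0 \<and> s n = 1
            \<and> (\<forall>j<n. s j < s (Suc j)) \<and> (\<forall>j<n. \<forall>t\<in>{s j..<s (Suc j)}. f t = f (s j)))"
    using s0 sn by blast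
  thus ?thesis unfolding Dset_def f_def[symmetric] by (simp only: mem_Collect_eq)
qed

lemma card_as_sum:
  assumes "finite A"
  shows "real (card {j \<in> A. P j}) = (\<Sum>j\<in>A. if P j then 1 else 0)"
  using assms by (simp add: sum.If_cases Int_def)

lemma Xproc_coord_meas:
  fixes Y :: "nat \<Rightarrow> 'w \<Rightarrow> real" and t :: real
  assumes Ym: "\<And>j. j \<in> {1..k} \<Longrightarrow> Y j \<in> borel_measurable M"
  shows "(\<lambda>\<omega>. a (card {j \<in> {1..k}. Y j \<omega> \<le> t})) \<in> borel_measurable M"
proof -
  have h: "(\<lambda>\<omega>. (\<Sum>j\<in>{1..k}. if Y j \<omega> \<le> t then 1 else 0::real)) \<in> borel_measurable M"
  proof (intro borel_measurable_sum)
    fix j assume "j \<in> {1..k}"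
    have "(\<lambda>\<omega>. indicator {..t} (Y j \<omega>) :: real) \<in> borel_measurable M"
      by (rule measurable_compose[OF Ym[OF \<open>j \<in> {1..k}\<close>] borel_measurable_indicator[OF atMost_borel[of t]]])
    thus "(\<lambda>\<omega>. if Y j \<omega> \<le> t then 1 else 0::real) \<in> borel_measurable M" by (simp add: indicator_def of_bool_def)
  qed
  have g: "(\<lambda>\<omega>. nat \<lfloor>\<Sum>j\<in>{1..k}. if Y j \<omega> \<le> t then 1 else 0::real\<rfloor>) \<in> measurable M (count_space UNIV)"
    using h by measurable
  have eq: "card {j \<in> {1..k}. Y j \<omega> \<le> t} = nat \<lfloor>\<Sum>j\<in>{1..k}. if Y j \<omega> \<le> t then 1 else 0::real\<rfloor>" for \<omega>
  proof -
    have "(\<Sum>j\<in>{1..k}. if Y j \<omega> \<le> t then 1 else 0::real) = real (card {j \<in> {1..k}. Y j \<omega> \<le> t})"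
      using card_as_sum[where A="{1..k}" and P="\<lambda>j. Y j \<omega> \<le> t"] by simp
    thus ?thesis by (simp only: floor_of_nat nat_int)
  qed
  show ?thesis unfolding eq
    by (rule measurable_compose_countable'[OF _ g]) auto
qed

lemma Xproc_in_Dset: "Xproc k a Y \<omega> \<in> Dset"
  unfolding Xproc_def by (rule step_in_Dset) simp

lemma Xproc_meas:
  fixes Y :: "nat \<Rightarrow> 'w \<Rightarrow> real"
  assumes Ym: "\<And>j. j \<in> {1..k} \<Longrightarrow> Y j \<in> borel_measurable M"
  shows "Xproc k a Y \<in> measurable M (Dmeas :: (real \<Rightarrow> 'e::metric_space) measure)"
  unfolding Dmeas_def
proof (rule measurable_restrict_space2)
  show "Xproc k a Y \<in> space M \<rightarrow> Dset" by (intro Pi_I Xproc_in_Dset)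
  have "(\<lambda>\<omega> t. (\<lambda>t \<omega>. if t \<in> {0..<1} then a (card {j \<in> {1..k}. Y j \<omega> \<le> t}) else undefined) t \<omega>)
     \<in> measurable M (Pi\<^sub>M {0..<1} (\<lambda>_. (borel :: 'e measure)))"
  proof (rule measurable_PiM_single')
    fix t :: real assume t: "t \<in> {0..<1}"
    show "(\<lambda>\<omega>. if t \<in> {0..<1} then a (card {j \<in> {1..k}. Y j \<omega> \<le> t}) else undefined) \<in> borel_measurable M"
      using Xproc_coord_meas[OF Ym, where a=a and t=t] by (simp only: t if_True)
  next
    show "(\<lambda>\<omega> t. if t \<in> {0..<1} then a (card {j \<in> {1..k}. Y j \<omega> \<le> t}) else undefined) \<in> space M \<rightarrow> (\<Pi>\<^sub>E t\<in>{0..<1}. space (borel :: 'e measure))"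
      by (auto simp: PiE_def extensional_def)
  qed
  moreover have "Xproc k a Y = (\<lambda>\<omega> t. (\<lambda>t \<omega>. if t \<in> {0..<1} then a (card {j \<in> {1..k}. Y j \<omega> \<le> t}) else undefined) t \<omega>)"
    unfolding Xproc_def restrict_def by (rule refl)
  ultimately show "Xproc k a Y \<in> measurable M (Pi\<^sub>M {0..<1} (\<lambda>_. (borel :: 'e measure)))"
    by (simp only:)
qed



lemma g_meas:
  fixes g :: "real \<Rightarrow> 'e::metric_space"
  assumes g: "g \<in> Dset"
  shows "(\<lambda>t. g (cl t)) \<in> borel_measurable (lborel :: real measure)"
proof -
  have "(\<lambda>t. (g, t)) \<in> measurable lborel ((Dmeas :: (real\<Rightarrow>'e::metric_space) measure) \<Otimes>\<^sub>M (lborel::real measure))"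
    using g by (intro measurable_Pair measurable_const measurable_ident_sets) (auto simp: space_Dmeas)
  from measurable_compose[OF this ev_meas] show ?thesis by simp
qed

lemma card_on_piece:
  fixes y :: "nat \<Rightarrow> real" and Jf :: "nat \<Rightarrow> real set"
  assumes ord: "\<And>i i' x z. i \<in> {1..k} \<Longrightarrow> i' \<in> {1..k} \<Longrightarrow> i < i' \<Longrightarrow> x \<in> Jf i \<Longrightarrow> z \<in> Jf i' \<Longrightarrow> x < z"
    and yJ: "\<And>j. j \<in> {1..k} \<Longrightarrow> y j \<in> Jf j"
    and i: "i \<in> {1..k}" and t: "t \<in> Jf i"
  shows "card {j \<in> {1..k}. y j \<le> t} = (if y i \<le> t then i else i - 1)"
proof -
  have "{j \<in> {1..k}. y j \<le> t} = {1..<i} \<union> (if y i \<le> t then {i} else {})"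
  proof (intro equalityI subsetI)
    fix j assume j: "j \<in> {j \<in> {1..k}. y j \<le> t}"
    show "j \<in> {1..<i} \<union> (if y i \<le> t then {i} else {})"
    proof (cases "j < i")
      case True thus ?thesis using j by auto
    next
      case False
      show ?thesis
      proof (cases "j = i")
        case True thus ?thesis using j by auto
      next
        case False
        hence "i < j" using \<open>\<not> j < i\<close> by simp
        hence "t < y j" using ord[OF i _ _ t yJ, of j] j by auto
        thus ?thesis using j by auto
      qed
    qed
  next
    fix j assume j: "j \<in> {1..<i} \<union> (if y i \<le> t then {i} else {})"
    show "j \<in> {j \<in> {1..k}. y j \<le> t}"
    proof (cases "j < i")
      case True
      hence jk: "j \<in> {1..k}" using j i by (auto split: if_splits)
      have "y j < t" using ord[OF jk i True yJ[OF jk] t] .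
      thus ?thesis using jk by simp
    next
      case False thus ?thesis using j i by (auto split: if_splits)
    qed
  qed
  moreover have "card ({1..<i} \<union> (if y i \<le> t then {i} else {})) = (if y i \<le> t then i else i - 1)"
    using i by (auto simp: card_insert_if)
  ultimately show ?thesis by simp
qed

definition Fi :: "(nat \<Rightarrow> 'e::metric_space) \<Rightarrow> (real \<Rightarrow> 'e) \<Rightarrow> real set \<Rightarrow> nat \<Rightarrow> real \<Rightarrow> ennreal" where
  "Fi a g J i y = (\<integral>\<^sup>+ t. indicator J t * ennreal (dist (a (if y \<le> t then i else i - 1)) (g (cl t))) \<partial>lborel)"

lemma Fi_integrand_meas:
  fixes g :: "real \<Rightarrow> 'e::metric_space"
  assumes g: "g \<in> Dset" and J: "J \<in> sets borel"
  shows "(\<lambda>t. indicator J t * ennreal (dist (a (if y \<le> t then i else i - 1)) (g (cl t)))) \<in> borel_measurable (lborel :: real measure)"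
proof -
  note gm = g_meas[OF g]
  have d: "(\<lambda>t. ennreal (dist (a c) (g (cl t)))) \<in> borel_measurable (lborel :: real measure)" for c
    by (intro measurable_compose[OF _ measurable_ennreal] borel_measurable_continuous_on[OF _ gm]) (intro continuous_intros)
  have e: "indicator J t * ennreal (dist (a (if y \<le> t then i else i - 1)) (g (cl t)))
      = indicator J t * (indicator {y..} t * ennreal (dist (a i) (g (cl t))) + indicator {..<y} t * ennreal (dist (a (i - 1)) (g (cl t))))" for t
    by (auto simp: indicator_def)
  have "(\<lambda>t. indicator J t * (indicator {y..} t * ennreal (dist (a i) (g (cl t))) + indicator {..<y} t * ennreal (dist (a (i - 1)) (g (cl t))))) \<in> borel_measurable (lborel :: real measure)"
    using d J by measurable
  thus ?thesis unfolding e .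
qed

lemma rt_lower:
  fixes Y :: "nat \<Rightarrow> 'w \<Rightarrow> real" and Jf :: "nat \<Rightarrow> real set" and g :: "real \<Rightarrow> 'e::metric_space"
  assumes ord: "\<And>i i' x z. i \<in> {1..k} \<Longrightarrow> i' \<in> {1..k} \<Longrightarrow> i < i' \<Longrightarrow> x \<in> Jf i \<Longrightarrow> z \<in> Jf i' \<Longrightarrow> x < z"
    and sub: "\<And>i. i \<in> {1..k} \<Longrightarrow> Jf i \<subseteq> {0..<1}"
    and Jm: "\<And>i. i \<in> {1..k} \<Longrightarrow> Jf i \<in> sets borel"
    and yJ: "\<And>j. j \<in> {1..k} \<Longrightarrow> Y j \<omega> \<in> Jf j"
    and g: "g \<in> Dset"
  shows "(\<Sum>i\<in>{1..k}. Fi a g (Jf i) i (Y i \<omega>)) \<le> rt k a (Xproc k a Y \<omega>) g"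
proof -
  define h where "h i t = indicator (Jf i) t * ennreal (dist (a (if Y i \<omega> \<le> t then i else i - 1)) (g (cl t)))" for i t
  define f where "f = Xproc k a Y \<omega>"
  have "(\<Sum>i\<in>{1..k}. Fi a g (Jf i) i (Y i \<omega>)) = (\<integral>\<^sup>+ t. (\<Sum>i\<in>{1..k}. h i t) \<partial>lborel)"
    unfolding Fi_def h_def using Fi_integrand_meas[OF g Jm]
    by (intro nn_integral_sum[symmetric]) auto
  also have "\<dots> \<le> rt k a f g" unfolding rt_def
  proof (rule nn_integral_mono)
    fix t :: real
    show "(\<Sum>i\<in>{1..k}. h i t) \<le> indicator {0..<1} t * (\<Sum>j\<in>{0..k}. indicator {a j} (f (cl t)) * ennreal (dist (a j) (g (cl t))))"
    proof (cases "\<exists>i0\<in>{1..k}. t \<in> Jf i0")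
      case False
      hence "h i t = 0" if "i \<in> {1..k}" for i using that by (auto simp: h_def)
      thus ?thesis by simp
    next
      case True
      then obtain i0 where i0: "i0 \<in> {1..k}" "t \<in> Jf i0" by blast
      have notin: "t \<notin> Jf i" if "i \<in> {1..k}" "i \<noteq> i0" for i
      proof
        assume ti: "t \<in> Jf i"
        show False
        proof (cases "i < i0")
          case True thus False using ord[OF that(1) i0(1) True ti i0(2)] by simp
        next
          case False hence "i0 < i" using that(2) by simp
          thus False using ord[OF i0(1) that(1) _ i0(2) ti] by simp
        qed
      qed
      have "(\<Sum>i\<in>{1..k}. h i t) = h i0 t + (\<Sum>i\<in>{1..k} - {i0}. h i t)"
        using i0 by (simp add: sum.remove)
      also have "(\<Sum>i\<in>{1..k} - {i0}. h i t) = 0" using notin by (auto simp: h_def)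
      finally have S: "(\<Sum>i\<in>{1..k}. h i t) = h i0 t" by simp
      define c where "c = (if Y i0 \<omega> \<le> t then i0 else i0 - 1)"
      have t01: "t \<in> {0..<1}" using sub[OF i0(1)] i0(2) by auto
      hence clt: "cl t = t" by (simp add: cl_def)
      have cc: "card {j \<in> {1..k}. Y j \<omega> \<le> t} = c" unfolding c_def
      proof (rule card_on_piece[where y="\<lambda>j. Y j \<omega>" and Jf=Jf])
        show "\<And>i i' x z. i \<in> {1..k} \<Longrightarrow> i' \<in> {1..k} \<Longrightarrow> i < i' \<Longrightarrow> x \<in> Jf i \<Longrightarrow> z \<in> Jf i' \<Longrightarrow> x < z"
          by (rule ord; assumption)
      qed (use yJ i0 in auto)
      have fc: "f (cl t) = a c"
        using cc clt t01 unfolding f_def Xproc_def by simp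
      have ck: "c \<in> {0..k}" using i0 by (auto simp: c_def)
      have "h i0 t = ennreal (dist (a c) (g (cl t)))" using i0 by (simp add: h_def c_def)
      also have "\<dots> = indicator {a c} (f (cl t)) * ennreal (dist (a c) (g (cl t)))" using fc by simp
      also have "\<dots> \<le> (\<Sum>j\<in>{0..k}. indicator {a j} (f (cl t)) * ennreal (dist (a j) (g (cl t))))"
        by (rule member_le_sum[OF ck]) auto
      finally show ?thesis using S t01 by simp
    qed
  qed
  finally show ?thesis by (simp add: f_def)
qed

lemma Fi_pair:
  fixes g :: "real \<Rightarrow> 'e::metric_space"
  assumes g: "g \<in> Dset" and J: "J = {l..<u}" and eps: "dist (a i) (a (i - 1)) \<ge> e" and e: "e > 0"
    and y: "y \<in> J" "y' \<in> J" "y \<le> y'"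
  shows "ennreal (e * (y' - y)) \<le> Fi a g J i y + Fi a g J i y'"
proof -
  note gm = g_meas[OF g]
  have d: "(\<lambda>t. ennreal (dist (a c) (g (cl t)))) \<in> borel_measurable (lborel :: real measure)" for c
    by (intro measurable_compose[OF _ measurable_ennreal] borel_measurable_continuous_on[OF _ gm]) (intro continuous_intros)
  have sub: "t \<in> J" if "t \<in> {y..<y'}" for t using that y J by auto
  have A: "(\<integral>\<^sup>+ t. indicator {y..<y'} t * ennreal (dist (a i) (g (cl t))) \<partial>lborel) \<le> Fi a g J i y"
    unfolding Fi_def
  proof (rule nn_integral_mono)
    fix t show "indicator {y..<y'} t * ennreal (dist (a i) (g (cl t))) \<le> indicator J t * ennreal (dist (a (if y \<le> t then i else i - 1)) (g (cl t)))"
      using sub[of t] by (cases "t \<in> {y..<y'}") auto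
  qed
  have B: "(\<integral>\<^sup>+ t. indicator {y..<y'} t * ennreal (dist (a (i - 1)) (g (cl t))) \<partial>lborel) \<le> Fi a g J i y'"
    unfolding Fi_def
  proof (rule nn_integral_mono)
    fix t show "indicator {y..<y'} t * ennreal (dist (a (i - 1)) (g (cl t))) \<le> indicator J t * ennreal (dist (a (if y' \<le> t then i else i - 1)) (g (cl t)))"
      using sub[of t] by (cases "t \<in> {y..<y'}") auto
  qed
  have "ennreal (e * (y' - y)) = (\<integral>\<^sup>+ t. ennreal e * indicator {y..<y'} t \<partial>lborel)"
    using y e by (simp add: nn_integral_cmult_indicator ennreal_mult)
  also have "\<dots> \<le> (\<integral>\<^sup>+ t. indicator {y..<y'} t * ennreal (dist (a i) (g (cl t))) + indicator {y..<y'} t * ennreal (dist (a (i - 1)) (g (cl t))) \<partial>lborel)"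
  proof (rule nn_integral_mono)
    fix t
    have "e \<le> dist (a i) (g (cl t)) + dist (a (i - 1)) (g (cl t))"
      using eps dist_triangle[of "a i" "a (i - 1)" "g (cl t)"] by (simp add: dist_commute)
    hence "ennreal e \<le> ennreal (dist (a i) (g (cl t))) + ennreal (dist (a (i - 1)) (g (cl t)))"
      by (simp add: ennreal_plus[symmetric] del: ennreal_plus)
    thus "ennreal e * indicator {y..<y'} t \<le> indicator {y..<y'} t * ennreal (dist (a i) (g (cl t))) + indicator {y..<y'} t * ennreal (dist (a (i - 1)) (g (cl t)))"
      by (cases "t \<in> {y..<y'}") auto
  qed
  also have "\<dots> = (\<integral>\<^sup>+ t. indicator {y..<y'} t * ennreal (dist (a i) (g (cl t))) \<partial>lborel) + (\<integral>\<^sup>+ t. indicator {y..<y'} t * ennreal (dist (a (i - 1)) (g (cl t))) \<partial>lborel)"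
    by (intro nn_integral_add borel_measurable_times_ennreal d) simp_all
  also have "\<dots> \<le> Fi a g J i y + Fi a g J i y'" using A B by (rule add_mono)
  finally show ?thesis .
qed

lemma Fi_helly:
  fixes g :: "real \<Rightarrow> 'e::metric_space"
  assumes g: "g \<in> Dset" and J: "J = {l..<u}" and eps: "dist (a i) (a (i - 1)) \<ge> e" and e: "e > 0"
  shows "\<exists>m. \<forall>y\<in>J. ennreal (e * \<bar>y - m\<bar>) \<le> Fi a g J i y"
proof (rule helly[OF e])
  fix y y' assume y: "y \<in> J" "y' \<in> J"
  show "ennreal (e * \<bar>y - y'\<bar>) \<le> Fi a g J i y + Fi a g J i y'"
  proof (cases "y \<le> y'")
    case True thus ?thesis using Fi_pair[OF g J eps e y True] by (simp add: abs_if)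
  next
    case False thus ?thesis using Fi_pair[OF g J eps e y(2) y(1)] by (simp add: abs_if add.commute)
  qed
qed



lemma prod_mono_ennreal:
  fixes f g :: "'i \<Rightarrow> ennreal"
  shows "(\<And>i. i \<in> A \<Longrightarrow> f i \<le> g i) \<Longrightarrow> prod f A \<le> prod g A"
proof (induction A rule: infinite_finite_induct)
  case (insert x F)
  thus ?case by (simp add: mult_mono)
qed simp_all

lemma emeasure_dyad: "emeasure lborel (dyad I) = ennreal (dyad_len I)"
  unfolding dyad_eq by (simp add: dyad_len_def)

lemma dyad_len_pos: "dyad_len I > 0" by (simp add: dyad_len_def)

lemma dyad_borel[measurable]: "dyad I \<in> sets borel"
  unfolding dyad_eq by simp

lemma factor_bound:
  fixes M :: "'w measure" and Y :: "'w \<Rightarrow> real"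
  assumes Ym: "Y \<in> borel_measurable M" and D: "distr M lborel Y = uniform_measure lborel (dyad I)"
    and c: "c > 0"
  shows "(\<integral>\<^sup>+\<omega>. ennreal (exp (- c * \<bar>Y \<omega> - m\<bar>)) \<partial>M) \<le> ennreal (2 / (c * dyad_len I))"
proof -
  have hm: "(\<lambda>y. ennreal (exp (- c * \<bar>y - m\<bar>))) \<in> borel_measurable (lborel :: real measure)" by measurable
  have Ym': "Y \<in> measurable M lborel" using Ym by simp
  have "(\<integral>\<^sup>+\<omega>. ennreal (exp (- c * \<bar>Y \<omega> - m\<bar>)) \<partial>M) = (\<integral>\<^sup>+y. ennreal (exp (- c * \<bar>y - m\<bar>)) \<partial>distr M lborel Y)"
    by (rule nn_integral_distr[symmetric, OF Ym']) (simp add: hm)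
  also have "\<dots> = (\<integral>\<^sup>+y. ennreal (exp (- c * \<bar>y - m\<bar>)) \<partial>uniform_measure lborel (dyad I))" using D by simp
  also have "\<dots> = (\<integral>\<^sup>+y. ennreal (exp (- c * \<bar>y - m\<bar>)) * indicator (dyad I) y \<partial>lborel) / emeasure lborel (dyad I)"
    by (rule nn_integral_uniform_measure[OF hm]) simp
  also have "\<dots> \<le> ennreal (2 / c) / ennreal (dyad_len I)"
  proof (unfold emeasure_dyad, rule divide_right_mono_ennreal)
    have "(\<integral>\<^sup>+y. ennreal (exp (- c * \<bar>y - m\<bar>)) * indicator (dyad I) y \<partial>lborel) \<le> (\<integral>\<^sup>+y. ennreal (exp (- c * \<bar>y - m\<bar>)) \<partial>lborel)"
      by (intro nn_integral_mono) (auto simp: indicator_def)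
    also have "\<dots> \<le> ennreal (2 / c)" by (rule int_exp_abs[OF c])
    finally show "(\<integral>\<^sup>+y. ennreal (exp (- c * \<bar>y - m\<bar>)) * indicator (dyad I) y \<partial>lborel) \<le> ennreal (2 / c)" .
  qed
  also have "\<dots> = ennreal (2 / (c * dyad_len I))"
    using dyad_len_pos[of I] c by (simp add: divide_ennreal field_simps)
  finally show ?thesis .
qed

lemma bound_M:
  fixes M :: "'w measure" and Y :: "nat \<Rightarrow> 'w \<Rightarrow> real" and a :: "nat \<Rightarrow> 'e::metric_space"
    and g :: "real \<Rightarrow> 'e"
  assumes Mp: "prob_space M"
    and e: "\<epsilon>0 > 0" and l: "l > 0" and Is: "Is \<in> im_pi k"
    and adj: "\<forall>i\<in>{1..k}. dist (a i) (a (i - 1)) \<ge> \<epsilon>0"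
    and ind: "prob_space.indep_vars M (\<lambda>_. borel) Y {1..k}"
    and D: "\<forall>i\<in>{1..k}. distr M lborel (Y i) = uniform_measure lborel (dyad (Is ! (i - 1)))"
    and g: "g \<in> Dset"
  shows "(\<integral>\<^sup>+\<omega>. EE l (rt k a (Xproc k a Y \<omega>) g) \<partial>M)
          \<le> ennreal (\<Prod>i\<in>{1..k}. 2 / (l * \<epsilon>0 * dyad_len (Is ! (i - 1))))"
proof -
  interpret prob_space M by fact
  define Jf where "Jf i = dyad (Is ! (i - 1))" for i
  have Ym: "Y i \<in> borel_measurable M" if "i \<in> {1..k}" for i
    using ind that by (auto simp: indep_vars_def)
  have ord: "x < z" if "i \<in> {1..k}" "i' \<in> {1..k}" "i < i'" "x \<in> Jf i" "z \<in> Jf i'" for i i' x z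
    using im_pi_props(3)[OF Is, of "i - 1" "i' - 1" x z] that unfolding Jf_def by auto
  have sub: "Jf i \<subseteq> {0..<1}" if "i \<in> {1..k}" for i
  proof -
    have "i - 1 < k" using that by auto
    thus ?thesis using im_pi_props(2)[OF Is, of "i - 1"] unfolding Jf_def by blast
  qed
  have Jm: "Jf i \<in> sets borel" for i unfolding Jf_def by simp
  have Jint: "Jf i = {dyad_left (Is ! (i - 1)) ..< dyad_left (Is ! (i - 1)) + dyad_len (Is ! (i - 1))}" for i
    unfolding Jf_def by (rule dyad_eq)
  have "\<forall>i\<in>{1..k}. \<exists>m. \<forall>y\<in>Jf i. ennreal (\<epsilon>0 * \<bar>y - m\<bar>) \<le> Fi a g (Jf i) i y"
    using Fi_helly[OF g Jint _ e] adj by blast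
  then obtain m where m: "\<forall>i\<in>{1..k}. \<forall>y\<in>Jf i. ennreal (\<epsilon>0 * \<bar>y - m i\<bar>) \<le> Fi a g (Jf i) i y"
    by (metis bchoice)
  have AEJ: "AE \<omega> in M. \<forall>j\<in>{1..k}. Y j \<omega> \<in> Jf j"
  proof (rule AE_finite_allI)
    fix j assume j: "j \<in> {1..k}"
    have Ym': "Y j \<in> measurable M lborel" using Ym[OF j] by simp
    have "AE x in distr M lborel (Y j). x \<in> Jf j"
    proof -
      have Dj: "distr M lborel (Y j) = uniform_measure lborel (dyad (Is ! (j - 1)))" using D j by blast
      show ?thesis unfolding Dj Jf_def by (rule AE_uniform_measureI) auto
    qed
    from AE_distrD[OF Ym' this] show "AE \<omega> in M. Y j \<omega> \<in> Jf j" .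
  qed simp
  define c where "c = l * \<epsilon>0"
  have c: "c > 0" using l e by (simp add: c_def)
  have pw: "AE \<omega> in M. EE l (rt k a (Xproc k a Y \<omega>) g) \<le> (\<Prod>i\<in>{1..k}. ennreal (exp (- c * \<bar>Y i \<omega> - m i\<bar>)))"
    using AEJ
  proof eventually_elim
    case (elim \<omega>)
    define S where "S = (\<Sum>i\<in>{1..k}. \<epsilon>0 * \<bar>Y i \<omega> - m i\<bar>)"
    have S0: "S \<ge> 0" unfolding S_def using e by (intro sum_nonneg) auto
    have "ennreal S = (\<Sum>i\<in>{1..k}. ennreal (\<epsilon>0 * \<bar>Y i \<omega> - m i\<bar>))"
      unfolding S_def using e by (subst sum_ennreal) auto
    also have "\<dots> \<le> (\<Sum>i\<in>{1..k}. Fi a g (Jf i) i (Y i \<omega>))"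
      using m elim by (intro sum_mono) auto
    also have "\<dots> \<le> rt k a (Xproc k a Y \<omega>) g"
    proof (rule rt_lower)
      show "\<And>i i' x z. i \<in> {1..k} \<Longrightarrow> i' \<in> {1..k} \<Longrightarrow> i < i' \<Longrightarrow> x \<in> Jf i \<Longrightarrow> z \<in> Jf i' \<Longrightarrow> x < z"
        by (rule ord)
    qed (use sub Jm elim g in auto)
    finally have le: "ennreal S \<le> rt k a (Xproc k a Y \<omega>) g" .
    show ?case
    proof (cases "rt k a (Xproc k a Y \<omega>) g = \<infinity>")
      case True thus ?thesis by (simp add: EE_def)
    next
      case False
      then obtain \<rho> where \<rho>: "rt k a (Xproc k a Y \<omega>) g = ennreal \<rho>" "\<rho> \<ge> 0"
        by (cases "rt k a (Xproc k a Y \<omega>) g") auto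
      have "S \<le> \<rho>" using le \<rho> S0 by (simp add: ennreal_le_iff)
      hence "exp (- l * \<rho>) \<le> exp (- l * S)" using l by simp
      also have "- l * S = (\<Sum>i\<in>{1..k}. - c * \<bar>Y i \<omega> - m i\<bar>)"
        unfolding S_def c_def by (simp add: sum_distrib_left mult.assoc)
      also have "exp \<dots> = (\<Prod>i\<in>{1..k}. exp (- c * \<bar>Y i \<omega> - m i\<bar>))" by (rule exp_sum) simp
      finally have "ennreal (exp (- l * \<rho>)) \<le> ennreal (\<Prod>i\<in>{1..k}. exp (- c * \<bar>Y i \<omega> - m i\<bar>))"
        by (rule ennreal_leI)
      thus ?thesis using \<rho> by (simp add: EE_def prod_ennreal)
    qed
  qed
  have "(\<integral>\<^sup>+\<omega>. EE l (rt k a (Xproc k a Y \<omega>) g) \<partial>M)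
        \<le> (\<integral>\<^sup>+\<omega>. (\<Prod>i\<in>{1..k}. ennreal (exp (- c * \<bar>Y i \<omega> - m i\<bar>))) \<partial>M)"
    by (rule nn_integral_mono_AE[OF pw])
  also have "\<dots> = (\<Prod>i\<in>{1..k}. \<integral>\<^sup>+\<omega>. ennreal (exp (- c * \<bar>Y i \<omega> - m i\<bar>)) \<partial>M)"
  proof (rule indep_vars_nn_integral)
    show "indep_vars (\<lambda>_. borel) (\<lambda>i \<omega>. ennreal (exp (- c * \<bar>Y i \<omega> - m i\<bar>))) {1..k}"
      by (rule indep_vars_compose2[OF ind, where Y="\<lambda>i y. ennreal (exp (- c * \<bar>y - m i\<bar>))"]) measurable
  qed auto
  also have "\<dots> \<le> (\<Prod>i\<in>{1..k}. ennreal (2 / (c * dyad_len (Is ! (i - 1)))))"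
  proof (rule prod_mono_ennreal)
    fix i assume i: "i \<in> {1..k}"
    show "(\<integral>\<^sup>+\<omega>. ennreal (exp (- c * \<bar>Y i \<omega> - m i\<bar>)) \<partial>M) \<le> ennreal (2 / (c * dyad_len (Is ! (i - 1))))"
      using D i by (intro factor_bound[OF Ym[OF i] _ c]) auto
  qed
  also have "\<dots> = ennreal (\<Prod>i\<in>{1..k}. 2 / (l * \<epsilon>0 * dyad_len (Is ! (i - 1))))"
    using l e by (subst prod_ennreal) (auto simp: c_def dyad_len_def)
  finally show ?thesis .
qed



lemma rt_le_rhoD:
  fixes a :: "nat \<Rightarrow> 'e::metric_space"
  assumes inj: "inj_on a {0..k}"
  shows "rt k a f g \<le> rhoD f g"
  unfolding rt_def rhoD_def
proof (rule nn_integral_mono)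
  fix t :: real
  show "indicator {0..<1} t * (\<Sum>j\<in>{0..k}. indicator {a j} (f (cl t)) * ennreal (dist (a j) (g (cl t))))
        \<le> ennreal (dist (f t) (g t)) * indicator {0..<1} t"
  proof (cases "t \<in> {0..<1}")
    case False thus ?thesis by simp
  next
    case True
    hence clt: "cl t = t" by (simp add: cl_def)
    have "(\<Sum>j\<in>{0..k}. indicator {a j} (f t) * ennreal (dist (a j) (g t))) \<le> ennreal (dist (f t) (g t))"
    proof (cases "\<exists>j0\<in>{0..k}. a j0 = f t")
      case False
      hence "indicator {a j} (f t) * ennreal (dist (a j) (g t)) = 0" if "j \<in> {0..k}" for j
        using that by (auto simp: indicator_def)
      hence "(\<Sum>j\<in>{0..k}. indicator {a j} (f t) * ennreal (dist (a j) (g t))) = 0"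
        by (intro sum.neutral) blast
      thus ?thesis by simp
    next
      case True
      then obtain j0 where j0: "j0 \<in> {0..k}" "a j0 = f t" by blast
      have z: "indicator {a j} (f t) * ennreal (dist (a j) (g t)) = 0" if "j \<in> {0..k} - {j0}" for j
      proof -
        have "a j \<noteq> a j0" using inj that j0(1) by (auto dest: inj_onD)
        thus ?thesis using j0 by (simp add: indicator_def)
      qed
      have "(\<Sum>j\<in>{0..k}. indicator {a j} (f t) * ennreal (dist (a j) (g t)))
          = indicator {a j0} (f t) * ennreal (dist (a j0) (g t)) + (\<Sum>j\<in>{0..k} - {j0}. indicator {a j} (f t) * ennreal (dist (a j) (g t)))"
        by (rule sum.remove) (use j0 in auto)
      also have "(\<Sum>j\<in>{0..k} - {j0}. indicator {a j} (f t) * ennreal (dist (a j) (g t))) = 0"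
        by (rule sum.neutral) (use z in blast)
      also have "indicator {a j0} (f t) * ennreal (dist (a j0) (g t)) = ennreal (dist (f t) (g t))" using j0 by simp
      finally show ?thesis by simp
    qed
    thus ?thesis using True clt by simp
  qed
qed

lemma arith_final:
  fixes L :: "nat \<Rightarrow> real" and k :: nat and e r lam C G :: real
  assumes k: "k \<ge> 1" and e: "e > 0" and Lpos: "\<And>i. i \<in> {1..k} \<Longrightarrow> L i > 0"
    and G: "G = (\<Prod>i=1..k. L i) powr (1 / real k)"
    and lam: "lam = 2 * exp (1 + r / real k) / (e * G)"
    and C: "C = (\<Prod>i\<in>{1..k}. 2 / (lam * e * L i))"
  shows "lam > 0" "C > 0"
    "(- ln C - r) / lam = e * (real k / (2 * exp 1)) * (\<Prod>i=1..k. L i) powr (1 / real k) * exp (- r / real k)"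
proof -
  have Pp: "(\<Prod>i=1..k. L i) > 0" using Lpos by (intro prod_pos) auto
  have Gp: "G > 0" unfolding G powr_gt_zero using Pp by linarith
  show lp: "lam > 0" using Gp e lam by simp
  show "C > 0" unfolding C using lp e Lpos by (intro prod_pos) auto
  have kp: "real k > 0" using k by simp
  have lnp: "ln (\<Prod>i=1..k. L i) = (\<Sum>i=1..k. ln (L i))"
    by (rule ln_prod) (use Lpos in force)+
  have "ln G = (1 / real k) * ln (\<Prod>i=1..k. L i)" unfolding G by (rule ln_powr)
  hence lnG: "real k * ln G = (\<Sum>i=1..k. ln (L i))"
    unfolding lnp[symmetric] using kp by simp
  have lnlam: "ln (lam * e) = ln 2 + 1 + r / real k - ln G"
  proof -
    have "lam * e = 2 * exp (1 + r / real k) / G" using lam e by simp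
    thus ?thesis using Gp by (simp add: ln_div ln_mult)
  qed
  have "ln C = (\<Sum>i=1..k. ln (2 / (lam * e * L i)))"
    unfolding C
  proof (rule ln_prod)
    fix i assume i: "i \<in> {1..k}"
    have "L i > 0" using Lpos[OF i] .
    thus "2 / (lam * e * L i) \<noteq> 0" using lp e by simp
  qed simp
  also have "\<dots> = (\<Sum>i=1..k. ln 2 - ln (lam * e) - ln (L i))"
  proof (rule sum.cong[OF refl])
    fix i assume i: "i \<in> {1..k}"
    have Li: "L i > 0" using Lpos[OF i] .
    thus "ln (2 / (lam * e * L i)) = ln 2 - ln (lam * e) - ln (L i)"
      using lp e by (simp add: ln_div ln_mult)
  qed
  also have "\<dots> = real k * (ln 2 - ln (lam * e)) - (\<Sum>i=1..k. ln (L i))"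
    by (simp add: sum_subtractf)
  also have "\<dots> = - real k - r" unfolding lnlam lnG[symmetric] using kp by (simp add: field_simps)
  finally have lnC: "ln C = - real k - r" .
  define X where "X = exp (r / real k)"
  have Xp: "X > 0" unfolding X_def by simp
  have "(- ln C - r) / lam = real k / lam" unfolding lnC by simp
  also have "\<dots> = real k * e * G / (2 * exp (1 + r / real k))" unfolding lam using Gp e by simp
  also have "exp (1 + r / real k) = exp 1 * X" unfolding X_def by (simp add: exp_add)
  finally have A: "(- ln C - r) / lam = real k * e * G / (2 * (exp 1 * X))" .
  have ex: "exp (- r / real k) = 1 / X" unfolding X_def by (simp add: exp_minus[symmetric] minus_divide_left divide_inverse)
  have B: "e * (real k / (2 * exp 1)) * G * exp (- r / real k) = real k * e * G / (2 * (exp 1 * X))"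
    unfolding ex using Xp by (simp add: field_simps)
  show "(- ln C - r) / lam = e * (real k / (2 * exp 1)) * (\<Prod>i=1..k. L i) powr (1 / real k) * exp (- r / real k)"
    using A B unfolding G by simp
qed

theorem lemma6:
  fixes M :: "'w measure" and Y :: "nat \<Rightarrow> 'w \<Rightarrow> real"
    and a :: "nat \<Rightarrow> 'e::metric_space" and Is :: "(nat \<times> nat) list"
    and k :: nat and \<epsilon>0 r :: real
  assumes "prob_space M"
    and "\<epsilon>0 > 0" and "k \<ge> 1" and "Is \<in> im_pi k"
    and "inj_on a {0..k}"
    and "\<forall>i\<in>{1..k}. dist (a i) (a (i - 1)) \<ge> \<epsilon>0"
    and "prob_space.indep_vars M (\<lambda>_. borel) Y {1..k}"
    and "\<forall>i\<in>{1..k}. distr M lborel (Y i) = uniform_measure lborel (dyad (Is ! (i - 1)))"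
    and "r \<ge> 0"
  shows "ennreal (\<epsilon>0 * (real k / (2 * exp 1))
                  * (\<Prod>i=1..k. dyad_len (Is ! (i - 1))) powr (1 / real k)
                  * exp (- r / real k))
         \<le> distortion_rate r (distr M Dmeas (Xproc k a Y))"
proof -
  interpret prob_space M by fact
  note ind = assms(7) and Dst = assms(8) and adj = assms(6) and inj = assms(5) and e = assms(2)
  have Ym: "Y j \<in> borel_measurable M" if "j \<in> {1..k}" for j
    using ind that by (auto simp: indep_vars_def)
  have Xm: "Xproc k a Y \<in> measurable M (Dmeas :: (real \<Rightarrow> 'e) measure)"
    by (rule Xproc_meas[OF Ym])
  define L where "L i = dyad_len (Is ! (i - 1))" for i
  define G where "G = (\<Prod>i=1..k. L i) powr (1 / real k)"
  define lam where "lam = 2 * exp (1 + r / real k) / (\<epsilon>0 * G)"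
  define C where "C = (\<Prod>i\<in>{1..k}. 2 / (lam * \<epsilon>0 * L i))"
  have Lpos: "\<And>i. i \<in> {1..k} \<Longrightarrow> L i > 0" unfolding L_def by (rule dyad_len_pos)
  note AF = arith_final[OF assms(3) e Lpos G_def lam_def C_def]
  have target: "\<epsilon>0 * (real k / (2 * exp 1)) * (\<Prod>i=1..k. dyad_len (Is ! (i - 1))) powr (1 / real k) * exp (- r / real k)
      = (- ln C - r) / lam" using AF(3) unfolding L_def by simp
  show ?thesis unfolding distortion_rate_def target
  proof (rule INF_greatest)
    fix Q :: "((real \<Rightarrow> 'e) \<times> (real \<Rightarrow> 'e)) measure" assume "Q \<in> {Q. prob_space Q \<and> sets Q = sets (Dmeas \<Otimes>\<^sub>M Dmeas)
                 \<and> distr Q Dmeas fst = distr M Dmeas (Xproc k a Y) \<and> mutual_inf Dmeas Dmeas Q \<le> ereal r}"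
    hence Qp: "prob_space Q" and Qs: "sets Q = sets ((Dmeas :: (real \<Rightarrow> 'e) measure) \<Otimes>\<^sub>M Dmeas)"
      and Q1: "distr Q Dmeas fst = distr M Dmeas (Xproc k a Y)"
      and QI: "mutual_inf Dmeas Dmeas Q \<le> ereal r" by auto
    interpret Q: prob_space Q by fact
    have mf: "fst \<in> measurable Q (Dmeas :: (real \<Rightarrow> 'e) measure)" by (simp add: measurable_cong_sets[OF Qs refl])
    have ms: "snd \<in> measurable Q (Dmeas :: (real \<Rightarrow> 'e) measure)" by (simp add: measurable_cong_sets[OF Qs refl])
    interpret P1: prob_space "distr Q (Dmeas :: (real \<Rightarrow> 'e) measure) fst" by (rule Q.prob_space_distr[OF mf])
    interpret P2: prob_space "distr Q (Dmeas :: (real \<Rightarrow> 'e) measure) snd" by (rule Q.prob_space_distr[OF ms])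
    interpret PP: pair_prob_space "distr Q (Dmeas :: (real \<Rightarrow> 'e) measure) fst" "distr Q (Dmeas :: (real \<Rightarrow> 'e) measure) snd" ..
    have psi_m: "(\<lambda>z. rt k a (fst z) (snd z)) \<in> borel_measurable ((Dmeas :: (real \<Rightarrow> 'e) measure) \<Otimes>\<^sub>M Dmeas)"
      by (rule rt_meas)
    have Em: "(\<lambda>z. EE lam (rt k a (fst z) (snd z))) \<in> borel_measurable ((Dmeas :: (real \<Rightarrow> 'e) measure) \<Otimes>\<^sub>M Dmeas)"
      using measurable_compose[OF psi_m EE_meas] by simp
    have sP: "sets (distr Q (Dmeas :: (real \<Rightarrow> 'e) measure) fst \<Otimes>\<^sub>M distr Q Dmeas snd) = sets ((Dmeas :: (real \<Rightarrow> 'e) measure) \<Otimes>\<^sub>M Dmeas)"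
      by (intro sets_pair_measure_cong) auto
    have Em': "(\<lambda>z. EE lam (rt k a (fst z) (snd z))) \<in> borel_measurable (distr Q (Dmeas :: (real \<Rightarrow> 'e) measure) fst \<Otimes>\<^sub>M distr Q Dmeas snd)"
      using Em by (simp add: measurable_cong_sets[OF sP refl])
    have bnd: "(\<integral>\<^sup>+z. EE lam (rt k a (fst z) (snd z)) \<partial>(distr Q (Dmeas :: (real \<Rightarrow> 'e) measure) fst \<Otimes>\<^sub>M distr Q Dmeas snd)) \<le> ennreal C"
    proof -
      have "(\<integral>\<^sup>+z. EE lam (rt k a (fst z) (snd z)) \<partial>(distr Q (Dmeas :: (real \<Rightarrow> 'e) measure) fst \<Otimes>\<^sub>M distr Q Dmeas snd))
          = (\<integral>\<^sup>+g. (\<integral>\<^sup>+f. EE lam (rt k a f g) \<partial>distr Q (Dmeas :: (real \<Rightarrow> 'e) measure) fst) \<partial>distr Q (Dmeas :: (real \<Rightarrow> 'e) measure) snd)"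
        using PP.nn_integral_snd[OF Em'] by simp
      also have "\<dots> \<le> (\<integral>\<^sup>+g. ennreal C \<partial>distr Q (Dmeas :: (real \<Rightarrow> 'e) measure) snd)"
      proof (rule nn_integral_mono)
        fix g assume "g \<in> space (distr Q (Dmeas :: (real \<Rightarrow> 'e) measure) snd)"
        hence gD: "g \<in> Dset" and gs: "g \<in> space (Dmeas :: (real \<Rightarrow> 'e) measure)" by (simp_all add: space_Dmeas)
        have fm: "(\<lambda>f. EE lam (rt k a f g)) \<in> borel_measurable (Dmeas :: (real \<Rightarrow> 'e) measure)"
          using measurable_compose[OF measurable_Pair2'[OF gs] Em] by simp
        have "(\<integral>\<^sup>+f. EE lam (rt k a f g) \<partial>distr Q (Dmeas :: (real \<Rightarrow> 'e) measure) fst)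
            = (\<integral>\<^sup>+f. EE lam (rt k a f g) \<partial>distr M (Dmeas :: (real \<Rightarrow> 'e) measure) (Xproc k a Y))" using Q1 by simp
        also have "\<dots> = (\<integral>\<^sup>+\<omega>. EE lam (rt k a (Xproc k a Y \<omega>) g) \<partial>M)"
          by (rule nn_integral_distr[OF Xm]) (simp add: fm)
        also have "\<dots> \<le> ennreal (\<Prod>i\<in>{1..k}. 2 / (lam * \<epsilon>0 * dyad_len (Is ! (i - 1))))"
          by (rule bound_M[OF assms(1) e AF(1) assms(4) adj ind Dst gD])
        also have "\<dots> = ennreal C" unfolding C_def L_def ..
        finally show "(\<integral>\<^sup>+f. EE lam (rt k a f g) \<partial>distr Q (Dmeas :: (real \<Rightarrow> 'e) measure) fst) \<le> ennreal C" .
      qed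
      also have "\<dots> = ennreal C" using P2.emeasure_space_1 by simp
      finally show ?thesis .
    qed
    have "ennreal ((- ln C - r) / lam) \<le> (\<integral>\<^sup>+z. rt k a (fst z) (snd z) \<partial>Q)"
      by (rule DV[OF Qp Qs QI psi_m AF(1) AF(2) bnd])
    also have "\<dots> \<le> (\<integral>\<^sup>+z. rhoD (fst z) (snd z) \<partial>Q)"
      by (intro nn_integral_mono rt_le_rhoD[OF inj])
    finally show "ennreal ((- ln C - r) / lam) \<le> (\<integral>\<^sup>+z. rhoD (fst z) (snd z) \<partial>Q)" .
  qed
qed

end
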